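(* Let $|\phi\rangle$ be a pure $n$-qubit stabilizer state and $A\subseteq\{0,1\}^n$ its computational-basis support. Under homogeneous local amplitude damping, $|\phi\rangle$ is a magic-insulator if and only if all strings in $A$ have the same Hamming weight. If the strings in $A$ do not all have the same Hamming weight, then $|\phi\rangle$ is a magic-generator. (Hence every pure stabilizer state is exactly one of the two, and the set $\{\gamma\in[0,1]:\mathcal E_\gamma^{\otimes n}(|\phi\rangle\langle\phi|)\in\mathcal S\}$ is either $[0,1]$ or $\{0,1\}$.)
   Context: $\mathcal E_\gamma$ is single-qubit amplitude damping with Kraus operators $|0\rangle\langle0|+\sqrt{1-\gamma}|1\rangle\langle1|$ and $\sqrt\gamma|0\rangle\langle1|$; homogeneous local damping means $\mathcal E_\gamma^{\otimes n}$. A pure stabilizer state is $C|0^n\rangle$ with $C$ Clifford; $\mathcal S$ is the convex hull of their density matrices. A pure stabilizer state $|\phi\rangle$ is a magic-insulator if $\mathcal E_\gamma^{\otimes n}(|\phi\rangle\langle\phi|)\in\mathcal S$ for all $\gamma\in[0,1]$, and a magic-generator if $\mathcal E_\gamma^{\otimes n}(|\phi\rangle\langle\phi|)\notin\mathcal S$ for every $0<\gamma<1$. The computational-basis support of $|\phi\rangle$ is $\{x:\langle x|\phi\rangle\ne0\}$. *)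

theory Defs
  imports Complex_Main "Jordan_Normal_Form.Matrix"
begin

text \<open>The computational basis vector |x> is indexed by the
natural number x < 2^n, and the bit of qubit j in x is  bit x j  (j < n).\<close>

definition dagger :: "complex mat \<Rightarrow> complex mat" where
  "dagger A = mat (dim_col A) (dim_row A) (\<lambda>(i,j). cnj (A $$ (j,i)))"

definition unitary_mat :: "nat \<Rightarrow> complex mat \<Rightarrow> bool" where
  "unitary_mat d U \<longleftrightarrow> U \<in> carrier_mat d d \<and> U * dagger U = 1\<^sub>m d \<and> dagger U * U = 1\<^sub>m d"

text \<open>n-fold tensor product of 2x2 matrices Ms 0, ..., Ms (n-1) (Ms j acts on qubit j).\<close>
definition ntensor :: "nat \<Rightarrow> (nat \<Rightarrow> complex mat) \<Rightarrow> complex mat" where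
  "ntensor n Ms = mat (2^n) (2^n)
     (\<lambda>(r,c). \<Prod>j<n. Ms j $$ (of_bool (bit r j), of_bool (bit c j)))"

definition pauliI :: "complex mat" where "pauliI = mat_of_rows_list 2 [[1,0],[0,1]]"
definition pauliX :: "complex mat" where "pauliX = mat_of_rows_list 2 [[0,1],[1,0]]"
definition pauliY :: "complex mat" where "pauliY = mat_of_rows_list 2 [[0,-\<i>],[\<i>,0]]"
definition pauliZ :: "complex mat" where "pauliZ = mat_of_rows_list 2 [[1,0],[0,-1]]"

definition pauli1 :: "nat \<Rightarrow> complex mat" where
  "pauli1 k = (if k = 0 then pauliI else if k = 1 then pauliX else if k = 2 then pauliY else pauliZ)"

definition pauli_group :: "nat \<Rightarrow> complex mat set" where
  "pauli_group n = {(\<i> ^ m) \<cdot>\<^sub>m ntensor n (\<lambda>j. pauli1 (p j)) | m p. m < 4 \<and> (\<forall>j. p j < 4)}"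

definition clifford :: "nat \<Rightarrow> complex mat \<Rightarrow> bool" where
  "clifford n U \<longleftrightarrow> unitary_mat (2^n) U \<and>
     (\<forall>P \<in> pauli_group n. U * P * dagger U \<in> pauli_group n)"

definition ket0 :: "nat \<Rightarrow> complex vec" where
  "ket0 n = unit_vec (2^n) 0"

definition stabilizer_state :: "nat \<Rightarrow> complex vec \<Rightarrow> bool" where
  "stabilizer_state n \<psi> \<longleftrightarrow> (\<exists>C. clifford n C \<and> \<psi> = C *\<^sub>v ket0 n)"

definition proj :: "complex vec \<Rightarrow> complex mat" where
  "proj \<psi> = mat (dim_vec \<psi>) (dim_vec \<psi>) (\<lambda>(i,j). \<psi> $ i * cnj (\<psi> $ j))"

definition stab_polytope :: "nat \<Rightarrow> complex mat set" where
  "stab_polytope n = {\<rho>. \<exists>(m::nat) (p::nat \<Rightarrow> real) \<psi>.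
      (\<forall>i<m. p i \<ge> 0 \<and> stabilizer_state n (\<psi> i)) \<and> (\<Sum>i<m. p i) = 1 \<and>
      \<rho> = mat (2^n) (2^n) (\<lambda>(r,c). \<Sum>i<m. complex_of_real (p i) * proj (\<psi> i) $$ (r,c))}"

definition AD_K0 :: "real \<Rightarrow> complex mat" where
  "AD_K0 \<gamma> = mat_of_rows_list 2 [[1,0],[0, complex_of_real (sqrt (1-\<gamma>))]]"
definition AD_K1 :: "real \<Rightarrow> complex mat" where
  "AD_K1 \<gamma> = mat_of_rows_list 2 [[0, complex_of_real (sqrt \<gamma>)],[0,0]]"

definition AD_kraus :: "nat \<Rightarrow> real \<Rightarrow> nat \<Rightarrow> complex mat" where
  "AD_kraus n \<gamma> s = ntensor n (\<lambda>j. if bit s j then AD_K1 \<gamma> else AD_K0 \<gamma>)"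

definition AD_channel :: "nat \<Rightarrow> real \<Rightarrow> complex mat \<Rightarrow> complex mat" where
  "AD_channel n \<gamma> \<rho> = mat (2^n) (2^n)
     (\<lambda>(r,c). \<Sum>s<2^n. (AD_kraus n \<gamma> s * \<rho> * dagger (AD_kraus n \<gamma> s)) $$ (r,c))"

definition magic_insulator :: "nat \<Rightarrow> complex vec \<Rightarrow> bool" where
  "magic_insulator n \<psi> \<longleftrightarrow>
     (\<forall>\<gamma>::real. 0 \<le> \<gamma> \<and> \<gamma> \<le> 1 \<longrightarrow> AD_channel n \<gamma> (proj \<psi>) \<in> stab_polytope n)"

definition magic_generator :: "nat \<Rightarrow> complex vec \<Rightarrow> bool" where
  "magic_generator n \<psi> \<longleftrightarrow>
     (\<forall>\<gamma>::real. 0 < \<gamma> \<and> \<gamma> < 1 \<longrightarrow> AD_channel n \<gamma> (proj \<psi>) \<notin> stab_polytope n)"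

definition support :: "nat \<Rightarrow> complex vec \<Rightarrow> nat set" where
  "support n \<psi> = {x. x < 2^n \<and> \<psi> $ x \<noteq> 0}"

definition hamming_weight :: "nat \<Rightarrow> nat \<Rightarrow> nat" where
  "hamming_weight n x = card {j. j < n \<and> bit x j}"

end

theory Submission
  imports Defs
begin

lemma bit_ge_zero: "(x::nat) < 2^n \<Longrightarrow> n \<le> j \<Longrightarrow> \<not> bit x j"
  by (metis bit_take_bit_iff not_le take_bit_nat_eq_self)

lemma bits_eqI: "(x::nat) < 2^n \<Longrightarrow> y < 2^n \<Longrightarrow> (\<And>j. j < n \<Longrightarrow> bit x j = bit y j) \<Longrightarrow> x = y"
  by (metis bit_eq_iff bit_ge_zero not_le)

lemma xor_lt: "(x::nat) < 2^n \<Longrightarrow> y < 2^n \<Longrightarrow> xor x y < 2^n"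
  by (metis take_bit_nat_eq_self_iff take_bit_xor)

lemma sum_double: "(\<Sum>k<2*M. g k) = (\<Sum>k<M. g (2*k) + g (2*k+1))"
  for g :: "nat \<Rightarrow> 'a::comm_monoid_add"
  by (induction M) (simp_all add: add.assoc)

lemma bitsum:
  fixes F :: "nat \<Rightarrow> bool \<Rightarrow> 'a::comm_semiring_1"
  shows "(\<Sum>k\<in>{..<(2::nat)^n}. \<Prod>j<n. F j (bit k j)) = (\<Prod>j<n. F j False + F j True)"
proof (induction n arbitrary: F)
  case 0
  then show ?case by simp
next
  case (Suc n)
  have "(\<Sum>k\<in>{..<(2::nat)^Suc n}. \<Prod>j<Suc n. F j (bit k j))
      = (\<Sum>k\<in>{..<2*(2::nat)^n}. F 0 (odd k) * (\<Prod>j<n. F (Suc j) (bit (k div 2) j)))"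
    by (simp add: prod.lessThan_Suc_shift bit_Suc bit_0 del: prod.lessThan_Suc)
  also have "\<dots> = (\<Sum>k\<in>{..<(2::nat)^n}. (F 0 False + F 0 True) * (\<Prod>j<n. F (Suc j) (bit k j)))"
    by (subst sum_double) (simp add: algebra_simps)
  also have "\<dots> = (F 0 False + F 0 True) * (\<Prod>j<n. F (Suc j) False + F (Suc j) True)"
    by (simp add: sum_distrib_left[symmetric] Suc[of "\<lambda>j. F (Suc j)"])
  also have "\<dots> = (\<Prod>j<Suc n. F j False + F j True)"
    by (simp only: prod.lessThan_Suc_shift)
  finally show ?case .
qed

definition ent :: "complex mat \<Rightarrow> bool \<Rightarrow> bool \<Rightarrow> complex" where
  "ent M a b = M $$ (of_bool a, of_bool b)"

definition m2 :: "complex \<Rightarrow> complex \<Rightarrow> complex \<Rightarrow> complex \<Rightarrow> complex mat" where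
  "m2 a b c d = mat 2 2 (\<lambda>(i,j). if i = 0 then (if j = 0 then a else b) else (if j = 0 then c else d))"

lemma m2_carrier[simp]: "m2 a b c d \<in> carrier_mat 2 2"
  and m2_dims[simp]: "dim_row (m2 a b c d) = 2" "dim_col (m2 a b c d) = 2"
  by (auto simp: m2_def)

lemma ent_m2[simp]: "ent (m2 a b c d) x y = (if x then (if y then d else c) else (if y then b else a))"
  by (simp add: ent_def m2_def)

lemma less2_cases: "(i::nat) < 2 \<Longrightarrow> i = 0 \<or> i = 1" by auto

lemma m2_eq_iff: "m2 a b c d = m2 a' b' c' d' \<longleftrightarrow> a = a' \<and> b = b' \<and> c = c' \<and> d = d'"
proof
  assume h: "m2 a b c d = m2 a' b' c' d'"
  show "a = a' \<and> b = b' \<and> c = c' \<and> d = d'"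
    using arg_cong[OF h, of "\<lambda>M. M $$ (0,0)"] arg_cong[OF h, of "\<lambda>M. M $$ (0,1)"]
      arg_cong[OF h, of "\<lambda>M. M $$ (1,0)"] arg_cong[OF h, of "\<lambda>M. M $$ (1,1)"]
    by (simp add: m2_def)
qed simp

lemma m2_entries: "M \<in> carrier_mat 2 2 \<Longrightarrow> M = m2 (M $$ (0,0)) (M $$ (0,1)) (M $$ (1,0)) (M $$ (1,1))"
  by (rule eq_matI) (auto simp: m2_def dest!: less2_cases)

lemma m2_mult[simp]: "m2 a b c d * m2 e f g h = m2 (a*e+b*g) (a*f+b*h) (c*e+d*g) (c*f+d*h)"
  by (rule eq_matI) (auto simp: m2_def scalar_prod_def row_def col_def numeral_2_eq_2 dest!: less2_cases)

lemma m2_add[simp]: "m2 a b c d + m2 e f g h = m2 (a+e) (b+f) (c+g) (d+h)"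
  by (rule eq_matI) (auto simp: m2_def dest!: less2_cases)

lemma m2_smult[simp]: "k \<cdot>\<^sub>m m2 a b c d = m2 (k*a) (k*b) (k*c) (k*d)"
  by (rule eq_matI) (auto simp: m2_def dest!: less2_cases)

lemma m2_one: "1\<^sub>m 2 = m2 1 0 0 1"
  by (rule eq_matI) (auto simp: m2_def dest!: less2_cases)

lemma m2_dagger[simp]: "dagger (m2 a b c d) = m2 (cnj a) (cnj c) (cnj b) (cnj d)"
  by (rule eq_matI) (auto simp: m2_def dagger_def dest!: less2_cases)

lemma pauli_m2: "pauliI = m2 1 0 0 1" "pauliX = m2 0 1 1 0" "pauliY = m2 0 (-\<i>) \<i> 0"
  "pauliZ = m2 1 0 0 (-1)"
  by (rule eq_matI; auto simp: m2_def pauliI_def pauliX_def pauliY_def pauliZ_def mat_of_rows_list_def dest!: less2_cases)+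

lemma AD_m2: "AD_K0 g = m2 1 0 0 (complex_of_real (sqrt (1-g)))"
   "AD_K1 g = m2 0 (complex_of_real (sqrt g)) 0 0"
  by (rule eq_matI; auto simp: m2_def AD_K0_def AD_K1_def mat_of_rows_list_def dest!: less2_cases)+

lemma nt_carrier[simp]: "ntensor n Ms \<in> carrier_mat (2^n) (2^n)"
  and nt_dims[simp]: "dim_row (ntensor n Ms) = 2^n" "dim_col (ntensor n Ms) = 2^n"
  by (auto simp: ntensor_def)

lemma nt_index: "r < 2^n \<Longrightarrow> c < 2^n \<Longrightarrow>
   ntensor n Ms $$ (r,c) = (\<Prod>j<n. ent (Ms j) (bit r j) (bit c j))"
  by (simp add: ntensor_def ent_def)

lemma nt_cong: "(\<And>j. j < n \<Longrightarrow> Ms j = Ns j) \<Longrightarrow> ntensor n Ms = ntensor n Ns"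
  unfolding ntensor_def by (intro cong_mat refl prod.cong) auto

lemma ent_mult2: "A \<in> carrier_mat 2 2 \<Longrightarrow> B \<in> carrier_mat 2 2 \<Longrightarrow>
   ent (A * B) a c = ent A a False * ent B False c + ent A a True * ent B True c"
  by (cases a; cases c) (auto simp: ent_def scalar_prod_def row_def col_def numeral_2_eq_2)

lemma nt_mult:
  assumes "\<And>j. j < n \<Longrightarrow> Ms j \<in> carrier_mat 2 2" "\<And>j. j < n \<Longrightarrow> Ns j \<in> carrier_mat 2 2"
  shows "ntensor n Ms * ntensor n Ns = ntensor n (\<lambda>j. Ms j * Ns j)"
proof (rule eq_matI)
  fix r c assume rc: "r < dim_row (ntensor n (\<lambda>j. Ms j * Ns j))" "c < dim_col (ntensor n (\<lambda>j. Ms j * Ns j))"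
  hence r: "r < 2^n" and c: "c < 2^n" by auto
  have "(ntensor n Ms * ntensor n Ns) $$ (r,c) = (\<Sum>k\<in>{..<(2::nat)^n}. ntensor n Ms $$ (r,k) * ntensor n Ns $$ (k,c))"
    using r c by (simp add: scalar_prod_def row_def col_def atLeast0LessThan)
  also have "\<dots> = (\<Sum>k\<in>{..<(2::nat)^n}. \<Prod>j<n. ent (Ms j) (bit r j) (bit k j) * ent (Ns j) (bit k j) (bit c j))"
    using r c by (intro sum.cong refl) (simp add: nt_index prod.distrib)
  also have "\<dots> = (\<Prod>j<n. ent (Ms j) (bit r j) False * ent (Ns j) False (bit c j) + ent (Ms j) (bit r j) True * ent (Ns j) True (bit c j))"
    by (rule bitsum)
  also have "\<dots> = (\<Prod>j<n. ent (Ms j * Ns j) (bit r j) (bit c j))"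
    using assms by (intro prod.cong refl) (simp add: ent_mult2)
  also have "\<dots> = ntensor n (\<lambda>j. Ms j * Ns j) $$ (r,c)" using r c by (simp add: nt_index)
  finally show "(ntensor n Ms * ntensor n Ns) $$ (r,c) = ntensor n (\<lambda>j. Ms j * Ns j) $$ (r,c)" .
qed auto

lemma nt_smult:
  assumes "\<And>j. j < n \<Longrightarrow> Ms j \<in> carrier_mat 2 2"
  shows "ntensor n (\<lambda>j. c j \<cdot>\<^sub>m Ms j) = (\<Prod>j<n. c j) \<cdot>\<^sub>m ntensor n Ms"
proof (rule eq_matI)
  fix r s assume "r < dim_row ((\<Prod>j<n. c j) \<cdot>\<^sub>m ntensor n Ms)" "s < dim_col ((\<Prod>j<n. c j) \<cdot>\<^sub>m ntensor n Ms)"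
  hence r: "r < 2^n" and s: "s < 2^n" by auto
  have "\<And>j. j < n \<Longrightarrow> ent (c j \<cdot>\<^sub>m Ms j) (bit r j) (bit s j) = c j * ent (Ms j) (bit r j) (bit s j)"
  proof -
    fix j assume "j < n"
    hence "dim_row (Ms j) = 2" "dim_col (Ms j) = 2" using assms by auto
    thus "ent (c j \<cdot>\<^sub>m Ms j) (bit r j) (bit s j) = c j * ent (Ms j) (bit r j) (bit s j)"
      by (simp add: ent_def)
  qed
  thus "ntensor n (\<lambda>j. c j \<cdot>\<^sub>m Ms j) $$ (r,s) = ((\<Prod>j<n. c j) \<cdot>\<^sub>m ntensor n Ms) $$ (r,s)"
    using r s by (simp add: nt_index prod.distrib)
qed auto

lemma nt_one: "ntensor n (\<lambda>j. 1\<^sub>m 2) = 1\<^sub>m (2^n)"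
proof (rule eq_matI)
  fix r c assume "r < dim_row (1\<^sub>m (2^n))" "c < dim_col (1\<^sub>m (2^n)::complex mat)"
  hence r: "r < 2^n" and c: "c < 2^n" by auto
  have "(\<Prod>j<n. ent (1\<^sub>m 2) (bit r j) (bit c j)) = (if r = c then 1 else 0)"
  proof (cases "r = c")
    case True thus ?thesis by (auto simp: m2_one intro!: prod.neutral)
  next
    case False
    then obtain j where "j < n" "bit r j \<noteq> bit c j" using bits_eqI[OF r c] by blast
    hence "(\<Prod>j<n. ent (1\<^sub>m 2) (bit r j) (bit c j)) = 0"
      by (intro prod_zero) (auto simp: m2_one intro!: bexI[of _ j])
    thus ?thesis using False by simp
  qed
  thus "ntensor n (\<lambda>j. 1\<^sub>m 2) $$ (r,c) = 1\<^sub>m (2^n) $$ (r,c)" using r c by (simp add: nt_index)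
qed auto

lemma nt_dagger:
  assumes "\<And>j. j < n \<Longrightarrow> Ms j \<in> carrier_mat 2 2"
  shows "dagger (ntensor n Ms) = ntensor n (\<lambda>j. dagger (Ms j))"
proof (rule eq_matI)
  fix r c assume "r < dim_row (ntensor n (\<lambda>j. dagger (Ms j)))" "c < dim_col (ntensor n (\<lambda>j. dagger (Ms j)))"
  hence r: "r < 2^n" and c: "c < 2^n" by auto
  have "\<And>j. j < n \<Longrightarrow> ent (dagger (Ms j)) (bit r j) (bit c j) = cnj (ent (Ms j) (bit c j) (bit r j))"
  proof -
    fix j assume "j < n"
    hence "dim_row (Ms j) = 2" "dim_col (Ms j) = 2" using assms by auto
    thus "ent (dagger (Ms j)) (bit r j) (bit c j) = cnj (ent (Ms j) (bit c j) (bit r j))"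
      by (simp add: ent_def dagger_def)
  qed
  thus "dagger (ntensor n Ms) $$ (r,c) = ntensor n (\<lambda>j. dagger (Ms j)) $$ (r,c)"
    using r c by (simp add: nt_index dagger_def)
qed (auto simp: dagger_def)

lemma smult_smult_mat: "a \<cdot>\<^sub>m (b \<cdot>\<^sub>m A) = (a * b) \<cdot>\<^sub>m (A :: complex mat)"
  by (rule eq_matI) auto

lemma one_smult_mat: "1 \<cdot>\<^sub>m A = (A :: complex mat)"
  by (rule eq_matI) auto

lemma smult_carrier: "A \<in> carrier_mat a b \<Longrightarrow> k \<cdot>\<^sub>m A \<in> carrier_mat a b" by simp

lemma nt_mult_vec_mono:
  assumes car: "\<And>j. j < n \<Longrightarrow> Ms j \<in> carrier_mat 2 2"
    and mono: "\<And>j a b. j < n \<Longrightarrow> b \<noteq> (a \<noteq> bit m j) \<Longrightarrow> ent (Ms j) a b = 0"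
    and m: "m < 2^n" and v: "v \<in> carrier_vec (2^n)" and r: "r < 2^n"
  shows "(ntensor n Ms *\<^sub>v v) $ r = (\<Prod>j<n. ent (Ms j) (bit r j) (bit r j \<noteq> bit m j)) * v $ (xor r m)"
proof -
  have "(ntensor n Ms *\<^sub>v v) $ r = (\<Sum>k\<in>{..<(2::nat)^n}. ntensor n Ms $$ (r,k) * v $ k)"
    using r v by (simp add: scalar_prod_def row_def atLeast0LessThan)
  also have "\<dots> = (\<Sum>k\<in>{..<(2::nat)^n}. if k = xor r m then ntensor n Ms $$ (r,k) * v $ k else 0)"
  proof (intro sum.cong refl)
    fix k assume k: "k \<in> {..<(2::nat)^n}"
    show "ntensor n Ms $$ (r,k) * v $ k = (if k = xor r m then ntensor n Ms $$ (r,k) * v $ k else 0)"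
    proof (cases "k = xor r m")
      case False
      then obtain j where j: "j < n" "bit k j \<noteq> bit (xor r m) j"
        using bits_eqI[of k n "xor r m"] k xor_lt[OF r m] by auto
      have z: "ent (Ms j) (bit r j) (bit k j) = 0" using mono[of j "bit k j" "bit r j"] j by (simp add: bit_xor_iff)
      have "ntensor n Ms $$ (r,k) = (\<Prod>j<n. ent (Ms j) (bit r j) (bit k j))" using r k by (simp add: nt_index)
      also have "\<dots> = 0" by (rule prod_zero, simp, rule bexI[of _ j], rule z, simp add: j(1))
      finally have "ntensor n Ms $$ (r,k) = 0" .
      thus ?thesis using False by simp
    qed simp
  qed
  also have "\<dots> = ntensor n Ms $$ (r, xor r m) * v $ (xor r m)"
    using xor_lt[OF r m] by (subst sum.delta) auto
  also have "\<dots> = (\<Prod>j<n. ent (Ms j) (bit r j) (bit r j \<noteq> bit m j)) * v $ (xor r m)"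
    using r xor_lt[OF r m] by (simp add: nt_index bit_xor_iff)
  finally show ?thesis .
qed

lemma nt_mult_vec_diag:
  assumes car: "\<And>j. j < n \<Longrightarrow> Ms j \<in> carrier_mat 2 2"
    and mono: "\<And>j a b. j < n \<Longrightarrow> b \<noteq> a \<Longrightarrow> ent (Ms j) a b = 0"
    and v: "v \<in> carrier_vec (2^n)" and r: "r < 2^n"
  shows "(ntensor n Ms *\<^sub>v v) $ r = (\<Prod>j<n. ent (Ms j) (bit r j) (bit r j)) * v $ r"
  using nt_mult_vec_mono[OF car _ _ v r, where m=0] mono by simp

lemma pauli1_simps: "pauli1 0 = m2 1 0 0 1" "pauli1 1 = m2 0 1 1 0" "pauli1 2 = m2 0 (-\<i>) \<i> 0"
  "a \<ge> 3 \<Longrightarrow> pauli1 a = m2 1 0 0 (-1)"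
  by (auto simp: pauli1_def pauli_m2)

lemma pauli1_carrier[simp]: "pauli1 a \<in> carrier_mat 2 2"
  by (simp add: pauli1_def pauli_m2)

lemma less4_cases: "(a::nat) < 4 \<Longrightarrow> a = 0 \<or> a = 1 \<or> a = 2 \<or> a = 3" by auto

definition pidx :: "nat \<Rightarrow> nat \<Rightarrow> nat" where
  "pidx a b = (if a = 0 then b else if b = 0 then a else if a = b then 0 else 6 - a - b)"
definition pph :: "nat \<Rightarrow> nat \<Rightarrow> nat" where
  "pph a b = (if (a=1 \<and> b=2) \<or> (a=2 \<and> b=3) \<or> (a=3 \<and> b=1) then 1
     else if (a=2 \<and> b=1) \<or> (a=3 \<and> b=2) \<or> (a=1 \<and> b=3) then 3 else 0)"
definition psign :: "nat \<Rightarrow> nat \<Rightarrow> complex" where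
  "psign a b = (if a = 0 \<or> b = 0 \<or> a = b then 1 else -1)"

lemma pidx_lt: "a < 4 \<Longrightarrow> b < 4 \<Longrightarrow> pidx a b < 4"
  by (auto simp: pidx_def)

lemma i3: "\<i>^3 = -\<i>" by (simp add: power3_eq_cube)

lemma pauli1_mult: assumes "a < 4" "b < 4"
  shows "pauli1 a * pauli1 b = (\<i> ^ pph a b) \<cdot>\<^sub>m pauli1 (pidx a b)"
  using less4_cases[OF assms(1)] less4_cases[OF assms(2)]
  by (elim disjE) (simp_all add: pauli1_def pauli_m2 pidx_def pph_def m2_eq_iff i3)

lemma pauli1_comm: assumes "a < 4" "b < 4"
  shows "pauli1 a * pauli1 b = psign a b \<cdot>\<^sub>m (pauli1 b * pauli1 a)"
  using less4_cases[OF assms(1)] less4_cases[OF assms(2)]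
  by (elim disjE) (simp_all add: pauli1_def pauli_m2 psign_def m2_eq_iff)

lemma pauli1_herm: assumes "a < 4" shows "dagger (pauli1 a) = pauli1 a"
  using less4_cases[OF assms(1)]
  by (elim disjE) (simp_all add: pauli1_def pauli_m2 m2_eq_iff)

lemma pauli1_sq: assumes "a < 4" shows "pauli1 a * pauli1 a = 1\<^sub>m 2"
  using less4_cases[OF assms(1)]
  by (elim disjE) (simp_all add: pauli1_def pauli_m2 m2_eq_iff m2_one)

definition pflip :: "nat \<Rightarrow> bool" where "pflip a = (a = 1 \<or> a = 2)"

lemma pauli1_mono: assumes "a < 4" shows "y \<noteq> (x \<noteq> pflip a) \<Longrightarrow> ent (pauli1 a) x y = 0"
  using less4_cases[OF assms(1)]
  by (elim disjE) (auto simp add: pauli1_def pauli_m2 pflip_def)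

lemma pauli1_unimod: assumes "a < 4" shows "cmod (ent (pauli1 a) x (x \<noteq> pflip a)) = 1"
  using less4_cases[OF assms(1)]
  by (elim disjE) (auto simp add: pauli1_def pauli_m2 pflip_def)

definition pN :: "nat \<Rightarrow> (nat \<Rightarrow> nat) \<Rightarrow> complex mat" where
  "pN n p = ntensor n (\<lambda>j. pauli1 (p j))"

lemma pN_carrier[simp]: "pN n p \<in> carrier_mat (2^n) (2^n)"
  by (simp add: pN_def)

lemma pN_mult:
  assumes "\<And>j. j < n \<Longrightarrow> p j < 4" "\<And>j. j < n \<Longrightarrow> q j < 4"
  shows "pN n p * pN n q = (\<Prod>j<n. \<i> ^ pph (p j) (q j)) \<cdot>\<^sub>m pN n (\<lambda>j. pidx (p j) (q j))"
proof -
  have "pN n p * pN n q = ntensor n (\<lambda>j. pauli1 (p j) * pauli1 (q j))"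
    unfolding pN_def by (rule nt_mult) auto
  also have "\<dots> = ntensor n (\<lambda>j. (\<i> ^ pph (p j) (q j)) \<cdot>\<^sub>m pauli1 (pidx (p j) (q j)))"
    using assms by (intro nt_cong) (simp add: pauli1_mult)
  also have "\<dots> = (\<Prod>j<n. \<i> ^ pph (p j) (q j)) \<cdot>\<^sub>m pN n (\<lambda>j. pidx (p j) (q j))"
    unfolding pN_def by (rule nt_smult) auto
  finally show ?thesis .
qed

lemma pN_comm:
  assumes "\<And>j. j < n \<Longrightarrow> p j < 4" "\<And>j. j < n \<Longrightarrow> q j < 4"
  shows "pN n p * pN n q = (\<Prod>j<n. psign (p j) (q j)) \<cdot>\<^sub>m (pN n q * pN n p)"
proof -
  have "pN n p * pN n q = ntensor n (\<lambda>j. pauli1 (p j) * pauli1 (q j))"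
    unfolding pN_def by (rule nt_mult) auto
  also have "\<dots> = ntensor n (\<lambda>j. psign (p j) (q j) \<cdot>\<^sub>m (pauli1 (q j) * pauli1 (p j)))"
    using assms by (intro nt_cong) (rule pauli1_comm; simp)
  also have "\<dots> = (\<Prod>j<n. psign (p j) (q j)) \<cdot>\<^sub>m ntensor n (\<lambda>j. pauli1 (q j) * pauli1 (p j))"
    by (rule nt_smult) (simp add: mult_carrier_mat[OF pauli1_carrier pauli1_carrier])
  also have "ntensor n (\<lambda>j. pauli1 (q j) * pauli1 (p j)) = pN n q * pN n p"
    unfolding pN_def by (rule nt_mult[symmetric]) auto
  finally show ?thesis .
qed

lemma pN_herm: "(\<And>j. j < n \<Longrightarrow> p j < 4) \<Longrightarrow> dagger (pN n p) = pN n p"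
  unfolding pN_def by (subst nt_dagger) (auto intro!: nt_cong simp: pauli1_herm)

lemma pN_sq: "(\<And>j. j < n \<Longrightarrow> p j < 4) \<Longrightarrow> pN n p * pN n p = 1\<^sub>m (2^n)"
  unfolding pN_def by (subst nt_mult) (auto simp: pauli1_sq nt_one cong: nt_cong)

lemma prod_sign: "(\<And>j. j < (n::nat) \<Longrightarrow> f j = 1 \<or> f j = -1) \<Longrightarrow> (\<Prod>j<n. f j) = 1 \<or> (\<Prod>j<n. (f j::complex)) = -1"
proof (induction n)
  case (Suc n)
  have h: "prod f {..<n} = 1 \<or> prod f {..<n} = -1" using Suc by auto
  have "f n = 1 \<or> f n = -1" using Suc.prems by auto
  thus ?case using h by auto
qed simp

lemma psign_pm: "psign a b = 1 \<or> psign a b = -1" by (simp add: psign_def)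

lemma i4: "\<i>^4 = 1"
proof -
  have "\<i>^4 = (\<i>^2)^2" by (simp add: power_mult[symmetric])
  thus ?thesis by simp
qed

lemma i_pow_mod: "\<i> ^ k = \<i> ^ (k mod 4)"
proof -
  have "\<i> ^ k = \<i> ^ (4 * (k div 4)) * \<i> ^ (k mod 4)" by (metis mult_div_mod_eq power_add)
  moreover have "\<i> ^ (4 * (k div 4)) = 1" by (simp only: power_mult i4) simp
  ultimately show ?thesis by simp
qed

lemma smult_mult_smult: "A \<in> carrier_mat a b \<Longrightarrow> B \<in> carrier_mat b c \<Longrightarrow>
   (x \<cdot>\<^sub>m A) * (y \<cdot>\<^sub>m B) = (x * y) \<cdot>\<^sub>m (A * B :: complex mat)"
  by (simp add: mult_smult_assoc_mat[of _ a b _ c] mult_smult_distrib[of _ a b _ c] smult_smult_mat mult.commute)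

lemma pg_elim: "P \<in> pauli_group n \<Longrightarrow> \<exists>m p. m < 4 \<and> (\<forall>j. p j < 4) \<and> P = \<i>^m \<cdot>\<^sub>m pN n p"
  by (auto simp: pauli_group_def pN_def)

lemma pg_intro: "(\<And>j. p j < 4) \<Longrightarrow> \<i>^k \<cdot>\<^sub>m pN n p \<in> pauli_group n"
  unfolding pauli_group_def pN_def
  by (subst i_pow_mod) (rule CollectI, rule exI[of _ "k mod 4"], rule exI[of _ p], auto)

lemma pg_intro1: "(\<And>j. p j < 4) \<Longrightarrow> pN n p \<in> pauli_group n"
  using pg_intro[of p 0 n] by (simp add: one_smult_mat)

lemma pg_carrier: "P \<in> pauli_group n \<Longrightarrow> P \<in> carrier_mat (2^n) (2^n)"
  by (auto dest!: pg_elim)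

lemma pg_mult:
  assumes "P \<in> pauli_group n" "Q \<in> pauli_group n"
  shows "P * Q \<in> pauli_group n"
proof -
  obtain m p where p: "m < 4" "\<forall>j. p j < 4" "P = \<i>^m \<cdot>\<^sub>m pN n p" using pg_elim[OF assms(1)] by blast
  obtain m' q where q: "m' < 4" "\<forall>j. q j < 4" "Q = \<i>^m' \<cdot>\<^sub>m pN n q" using pg_elim[OF assms(2)] by blast
  have "P * Q = (\<i>^m * \<i>^m') \<cdot>\<^sub>m (pN n p * pN n q)"
    using p q by (simp add: smult_mult_smult[OF pN_carrier pN_carrier])
  also have "\<dots> = (\<i>^m * \<i>^m' * (\<Prod>j<n. \<i> ^ pph (p j) (q j))) \<cdot>\<^sub>m pN n (\<lambda>j. pidx (p j) (q j))"
    using p q by (simp add: pN_mult smult_smult_mat)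
  also have "\<dots> = \<i>^(m + m' + (\<Sum>j<n. pph (p j) (q j))) \<cdot>\<^sub>m pN n (\<lambda>j. pidx (p j) (q j))"
    by (simp add: power_add power_sum)
  also have "\<dots> \<in> pauli_group n" using p q by (intro pg_intro) (simp add: pidx_lt)
  finally show ?thesis .
qed

lemma pg_smult: assumes "P \<in> pauli_group n" shows "(\<i>^k) \<cdot>\<^sub>m P \<in> pauli_group n"
proof -
  obtain m p where p: "m < 4" "\<forall>j. p j < 4" "P = \<i>^m \<cdot>\<^sub>m pN n p" using pg_elim[OF assms] by blast
  have "(\<i>^k) \<cdot>\<^sub>m P = \<i>^(k+m) \<cdot>\<^sub>m pN n p" using p by (simp add: smult_smult_mat power_add)
  thus ?thesis using p(2) by (simp add: pg_intro)
qed

lemma pg_neg: "P \<in> pauli_group n \<Longrightarrow> (-1) \<cdot>\<^sub>m P \<in> pauli_group n"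
  using pg_smult[of P n 2] by simp

lemma pg_comm:
  assumes "P \<in> pauli_group n" "Q \<in> pauli_group n"
  shows "P * Q = Q * P \<or> P * Q = (-1) \<cdot>\<^sub>m (Q * P)"
proof -
  obtain m p where p: "m < 4" "\<forall>j. p j < 4" "P = \<i>^m \<cdot>\<^sub>m pN n p" using pg_elim[OF assms(1)] by blast
  obtain m' q where q: "m' < 4" "\<forall>j. q j < 4" "Q = \<i>^m' \<cdot>\<^sub>m pN n q" using pg_elim[OF assms(2)] by blast
  have PQ: "P * Q = (\<i>^m * \<i>^m') \<cdot>\<^sub>m (pN n p * pN n q)"
    using p q by (simp add: smult_mult_smult[OF pN_carrier pN_carrier])
  have QP: "Q * P = (\<i>^m * \<i>^m') \<cdot>\<^sub>m (pN n q * pN n p)"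
    using p q by (simp add: smult_mult_smult[OF pN_carrier pN_carrier] mult.commute)
  have c: "pN n p * pN n q = (\<Prod>j<n. psign (p j) (q j)) \<cdot>\<^sub>m (pN n q * pN n p)"
    using p q by (intro pN_comm) auto
  from prod_sign[of n "\<lambda>j. psign (p j) (q j)"] psign_pm
  have "(\<Prod>j<n. psign (p j) (q j)) = 1 \<or> (\<Prod>j<n. psign (p j) (q j)) = -1" by blast
  thus ?thesis
  proof
    assume "(\<Prod>j<n. psign (p j) (q j)) = 1"
    thus ?thesis using PQ QP c by (simp add: one_smult_mat)
  next
    assume "(\<Prod>j<n. psign (p j) (q j)) = -1"
    thus ?thesis using PQ QP c by (simp add: smult_smult_mat mult.commute)
  qed
qed

lemma pg_finite: "finite (pauli_group n)"
proof -
  let ?S = "{..<(4::nat)} \<times> (PiE {..<n} (\<lambda>_. {..<(4::nat)}))"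
  have "pauli_group n \<subseteq> (\<lambda>(m,p). \<i>^m \<cdot>\<^sub>m pN n p) ` ?S"
  proof
    fix P assume "P \<in> pauli_group n"
    then obtain m p where p: "m < 4" "\<forall>j. p j < 4" "P = \<i>^m \<cdot>\<^sub>m pN n p" using pg_elim by blast
    let ?p = "restrict p {..<n}"
    have "pN n p = pN n ?p" unfolding pN_def by (rule nt_cong) auto
    moreover have "(m, ?p) \<in> ?S" using p by auto
    ultimately show "P \<in> (\<lambda>(m,p). \<i>^m \<cdot>\<^sub>m pN n p) ` ?S"
      using p by (intro image_eqI[of _ _ "(m, ?p)"]) auto
  qed
  moreover have "finite ?S" by (intro finite_cartesian_product finite_PiE) auto
  ultimately show ?thesis using finite_subset by blast
qed

lemma dagger_carrier[simp]: "A \<in> carrier_mat a b \<Longrightarrow> dagger A \<in> carrier_mat b a"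
  by (auto simp: dagger_def)

lemma dagger_dims[simp]: "dim_row (dagger A) = dim_col A" "dim_col (dagger A) = dim_row A"
  by (auto simp: dagger_def)

lemma dagger_index: "i < dim_col A \<Longrightarrow> j < dim_row A \<Longrightarrow> dagger A $$ (i,j) = cnj (A $$ (j,i))"
  by (simp add: dagger_def)

lemma dagger_dagger[simp]: "dagger (dagger A) = A"
  by (rule eq_matI) (auto simp: dagger_def)

lemma dagger_mult: "A \<in> carrier_mat a b \<Longrightarrow> B \<in> carrier_mat b c \<Longrightarrow> dagger (A * B) = dagger B * dagger A"
  by (rule eq_matI) (auto simp: dagger_def scalar_prod_def row_def col_def intro!: sum.cong)

lemma dagger_smult: "dagger (k \<cdot>\<^sub>m A) = cnj k \<cdot>\<^sub>m dagger A"
  by (rule eq_matI) (auto simp: dagger_def)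

lemma dagger_add: "A \<in> carrier_mat a b \<Longrightarrow> B \<in> carrier_mat a b \<Longrightarrow> dagger (A + B) = dagger A + dagger B"
  by (rule eq_matI) (auto simp: dagger_def)

lemma dagger_one[simp]: "dagger (1\<^sub>m n) = 1\<^sub>m n"
  by (rule eq_matI) (auto simp: dagger_def)

lemma smult_mult_vec: "A \<in> carrier_mat a b \<Longrightarrow> v \<in> carrier_vec b \<Longrightarrow> (k \<cdot>\<^sub>m A) *\<^sub>v v = k \<cdot>\<^sub>v (A *\<^sub>v v)"
  by (rule eq_vecI) (auto simp: scalar_prod_def row_def sum_distrib_left mult.assoc)

lemma assocN: "A \<in> carrier_mat N N \<Longrightarrow> B \<in> carrier_mat N N \<Longrightarrow> C \<in> carrier_mat N N \<Longrightarrow> A * B * C = A * (B * C)"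
  for A :: "complex mat" by (rule assoc_mult_mat)
lemma multN: "A \<in> carrier_mat N N \<Longrightarrow> B \<in> carrier_mat N N \<Longrightarrow> A * B \<in> carrier_mat N N"
  by (rule mult_carrier_mat)
lemma addN: "A \<in> carrier_mat N N \<Longrightarrow> B \<in> carrier_mat N N \<Longrightarrow> A + B \<in> carrier_mat N N"
  by (rule add_carrier_mat)

lemma cliffordD: assumes "clifford n C"
  shows "C \<in> carrier_mat (2^n) (2^n)" "C * dagger C = 1\<^sub>m (2^n)" "dagger C * C = 1\<^sub>m (2^n)"
    "\<And>P. P \<in> pauli_group n \<Longrightarrow> C * P * dagger C \<in> pauli_group n"
  using assms by (auto simp: clifford_def unitary_mat_def)

lemma clifford_one: "clifford n (1\<^sub>m (2^n))"
proof -
  have "1\<^sub>m (2^n) * P * 1\<^sub>m (2^n) \<in> pauli_group n" if "P \<in> pauli_group n" for P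
    using that pg_carrier[OF that] by simp
  thus ?thesis by (auto simp: clifford_def unitary_mat_def)
qed

lemma clifford_mult: assumes A: "clifford n A" and B: "clifford n B" shows "clifford n (A * B)"
proof -
  note a = cliffordD[OF A] and b = cliffordD[OF B]
  have dAB: "dagger (A * B) = dagger B * dagger A" using a(1) b(1) by (rule dagger_mult)
  have AB: "A * B \<in> carrier_mat (2^n) (2^n)" using a(1) b(1) by simp
  have u1: "A * B * dagger (A * B) = 1\<^sub>m (2^n)"
  proof -
    have "A * B * (dagger B * dagger A) = A * (B * dagger B) * dagger A"
      using a(1) b(1) by (simp add: assocN[of _ "2^n"] multN)
    thus ?thesis using a b dAB by simp
  qed
  have u2: "dagger (A * B) * (A * B) = 1\<^sub>m (2^n)"
  proof -
    have "dagger B * dagger A * (A * B) = dagger B * (dagger A * A) * B"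
      using a(1) b(1) by (simp add: assocN[of _ "2^n"] multN)
    thus ?thesis using a b dAB by simp
  qed
  have c: "A * B * P * dagger (A * B) \<in> pauli_group n" if P: "P \<in> pauli_group n" for P
  proof -
    have Pc: "P \<in> carrier_mat (2^n) (2^n)" using P by (rule pg_carrier)
    have "A * B * P * dagger (A * B) = A * (B * P * dagger B) * dagger A"
      using a(1) b(1) Pc dAB by (simp add: assocN[of _ "2^n"] multN)
    thus ?thesis using a(4) b(4) P by simp
  qed
  show ?thesis using AB u1 u2 c by (simp add: clifford_def unitary_mat_def)
qed

lemma ket0_carrier[simp]: "ket0 n \<in> carrier_vec (2^n)" by (simp add: ket0_def)
lemma ket0_dim[simp]: "dim_vec (ket0 n) = 2^n" by (simp add: ket0_def)
lemma ket0_index: "r < 2^n \<Longrightarrow> ket0 n $ r = (if r = 0 then 1 else 0)" by (simp add: ket0_def)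

lemma stab_carrier: "stabilizer_state n \<phi> \<Longrightarrow> \<phi> \<in> carrier_vec (2^n)"
  by (auto simp: stabilizer_state_def dest!: cliffordD(1))

lemma stab_clifford: assumes "clifford n U" "stabilizer_state n \<phi>" shows "stabilizer_state n (U *\<^sub>v \<phi>)"
proof -
  obtain C where C: "clifford n C" "\<phi> = C *\<^sub>v ket0 n" using assms(2) by (auto simp: stabilizer_state_def)
  have "U *\<^sub>v \<phi> = (U * C) *\<^sub>v ket0 n" using C cliffordD(1)[OF C(1)] cliffordD(1)[OF assms(1)]
    by (simp add: assoc_mult_mat_vec[of _ "2^n" "2^n" _ "2^n"])
  thus ?thesis using clifford_mult[OF assms(1) C(1)] by (auto simp: stabilizer_state_def)
qed

lemma stab_ket0: "stabilizer_state n (ket0 n)"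
  unfolding stabilizer_state_def using clifford_one[of n] by (intro exI[of _ "1\<^sub>m (2^n)"]) auto

lemma assocNv: "A \<in> carrier_mat N N \<Longrightarrow> B \<in> carrier_mat N N \<Longrightarrow> v \<in> carrier_vec N \<Longrightarrow> A * B *\<^sub>v v = A *\<^sub>v (B *\<^sub>v v)"
  by (rule assoc_mult_mat_vec)
lemma mvN: "A \<in> carrier_mat N N \<Longrightarrow> v \<in> carrier_vec N \<Longrightarrow> A *\<^sub>v v \<in> carrier_vec N"
  by (rule mult_mat_vec_carrier)
lemma smultL: "A \<in> carrier_mat N N \<Longrightarrow> B \<in> carrier_mat N N \<Longrightarrow> (k \<cdot>\<^sub>m A) * B = k \<cdot>\<^sub>m (A * B)"
  for A :: "complex mat" using mult_smult_assoc_mat by blast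
lemma smultR: "A \<in> carrier_mat N N \<Longrightarrow> B \<in> carrier_mat N N \<Longrightarrow> A * (k \<cdot>\<^sub>m B) = k \<cdot>\<^sub>m (A * B)"
  for A :: "complex mat" using mult_smult_distrib by blast
lemma smultN: "A \<in> carrier_mat N N \<Longrightarrow> k \<cdot>\<^sub>m A \<in> carrier_mat N N" for A :: "complex mat" by simp
lemma cancelL: "A \<in> carrier_mat N N \<Longrightarrow> B \<in> carrier_mat N N \<Longrightarrow> A * B = 1\<^sub>m N \<Longrightarrow> X \<in> carrier_mat N N \<Longrightarrow> A * (B * X) = X"
  for A :: "complex mat" by (metis assoc_mult_mat left_mult_one_mat)
lemma cancelLv: "A \<in> carrier_mat N N \<Longrightarrow> B \<in> carrier_mat N N \<Longrightarrow> A * B = 1\<^sub>m N \<Longrightarrow> v \<in> carrier_vec N \<Longrightarrow> A *\<^sub>v (B *\<^sub>v v) = v"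
  for A :: "complex mat" by (metis assoc_mult_mat_vec one_mult_mat_vec)

lemmas matN = assocN multN addN assocNv mvN smultL smultR smultN

lemma pN_dims[simp]: "dim_row (pN n p) = 2^n" "dim_col (pN n p) = 2^n" by (simp_all add: pN_def)

definition zq :: "nat \<Rightarrow> nat \<Rightarrow> nat" where "zq j = (\<lambda>l. if l = j then 3 else 0)"

lemma zq_lt[simp]: "zq j l < 4" by (simp add: zq_def)

lemma Z_pg: "pN n (zq j) \<in> pauli_group n" by (rule pg_intro1) simp
lemma Z_herm: "dagger (pN n (zq j)) = pN n (zq j)" by (rule pN_herm) simp
lemma Z_sq: "pN n (zq j) * pN n (zq j) = 1\<^sub>m (2^n)" by (rule pN_sq) simp

lemma prod_delta1: "(\<And>l. l < n \<Longrightarrow> l \<noteq> j \<Longrightarrow> f l = 1) \<Longrightarrow> j < (n::nat) \<Longrightarrow> (\<Prod>l<n. f l) = (f j :: complex)"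
proof -
  assume a: "\<And>l. l < n \<Longrightarrow> l \<noteq> j \<Longrightarrow> f l = 1" "j < n"
  have "(\<Prod>l<n. f l) = (\<Prod>l<n. if l = j then f j else 1)" using a(1) by (intro prod.cong) auto
  also have "\<dots> = f j" using a(2) by (simp add: prod.delta)
  finally show ?thesis .
qed

lemma Z_vec: assumes v: "v \<in> carrier_vec (2^n)" and j: "j < n" and r: "r < 2^n"
  shows "(pN n (zq j) *\<^sub>v v) $ r = (if bit r j then -1 else 1) * v $ r"
proof -
  have "(pN n (zq j) *\<^sub>v v) $ r = (\<Prod>l<n. ent (pauli1 (zq j l)) (bit r l) (bit r l)) * v $ r"
    unfolding pN_def
    by (rule nt_mult_vec_diag[OF _ _ v r]) (auto simp: zq_def pauli1_def pauli_m2)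
  also have "(\<Prod>l<n. ent (pauli1 (zq j l)) (bit r l) (bit r l)) = ent (pauli1 (zq j j)) (bit r j) (bit r j)"
    by (rule prod_delta1[OF _ j]) (auto simp: zq_def pauli1_def pauli_m2)
  finally show ?thesis by (simp add: zq_def pauli1_def pauli_m2)
qed

lemma diag_pauli: "p = 0 \<or> p = 3 \<Longrightarrow> b \<noteq> a \<Longrightarrow> ent (pauli1 p) a b = 0"
  by (auto simp: pauli1_def pauli_m2)

lemma pN_ket0: assumes "\<And>l. l < n \<Longrightarrow> p l = 0 \<or> p l = 3"
  shows "pN n p *\<^sub>v ket0 n = ket0 n"
proof (rule eq_vecI)
  fix r assume "r < dim_vec (ket0 n)"
  hence r: "r < 2^n" by simp
  have "(pN n p *\<^sub>v ket0 n) $ r = (\<Prod>l<n. ent (pauli1 (p l)) (bit r l) (bit r l)) * ket0 n $ r"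
    unfolding pN_def
    by (rule nt_mult_vec_diag[OF _ _ _ r]) (auto intro!: diag_pauli assms)
  also have "\<dots> = ket0 n $ r"
  proof (cases "r = 0")
    case True
    have "(\<Prod>l<n. ent (pauli1 (p l)) (bit r l) (bit r l)) = 1"
    proof (intro prod.neutral ballI)
      fix l assume "l \<in> {..<n}"
      hence "p l = 0 \<or> p l = 3" using assms by auto
      thus "ent (pauli1 (p l)) (bit r l) (bit r l) = 1" using True by (auto simp: pauli1_def pauli_m2)
    qed
    thus ?thesis by simp
  qed (simp add: ket0_index r)
  finally show "(pN n p *\<^sub>v ket0 n) $ r = ket0 n $ r" .
qed simp

lemma Z_sign: assumes k: "k < n" and p: "\<And>l. p l < 4"
  shows "(\<Prod>l<n. psign (zq k l) (p l)) = (if pflip (p k) then -1 else 1)"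
proof -
  have "(\<Prod>l<n. psign (zq k l) (p l)) = psign (zq k k) (p k)"
    by (rule prod_delta1[OF _ k]) (auto simp: zq_def psign_def)
  also have "\<dots> = (if pflip (p k) then -1 else 1)"
    using less4_cases[OF p[of k]] by (auto simp: zq_def psign_def pflip_def)
  finally show ?thesis .
qed

lemma Z_anti: assumes "k < n" "\<And>l. p l < 4" "pflip (p k)"
  shows "pN n (zq k) * pN n p = (-1) \<cdot>\<^sub>m (pN n p * pN n (zq k))"
  using pN_comm[of n "zq k" p] Z_sign[OF assms(1,2)] assms by simp

lemma Z_comm: assumes "k < n" "\<And>l. p l < 4" "\<not> pflip (p k)"
  shows "pN n (zq k) * pN n p = pN n p * pN n (zq k)"
  using pN_comm[of n "zq k" p] Z_sign[OF assms(1,2)] assms by (simp add: one_smult_mat)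

lemma clifford_preimage:
  assumes C: "clifford n C" and Q: "Q \<in> pauli_group n"
  shows "\<exists>Q'\<in>pauli_group n. C * Q' * dagger C = Q"
proof -
  note c = cliffordD[OF C]
  let ?f = "\<lambda>P. C * P * dagger C"
  have e: "dagger C * ?f X * C = X" if X: "X \<in> carrier_mat (2^n) (2^n)" for X
  proof -
    have "dagger C * ?f X * C = (dagger C * C) * X * (dagger C * C)"
      using c(1) X by (simp add: assocN[of _ "2^n"] multN)
    thus ?thesis using c(3) X by simp
  qed
  have inj: "inj_on ?f (pauli_group n)"
  proof (rule inj_onI)
    fix P P' assume P: "P \<in> pauli_group n" and P': "P' \<in> pauli_group n" and eq: "?f P = ?f P'"
    have "P = dagger C * ?f P * C" using e[OF pg_carrier[OF P]] by simp
    also have "\<dots> = dagger C * ?f P' * C" by (simp only: eq)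
    also have "\<dots> = P'" using e[OF pg_carrier[OF P']] by simp
    finally show "P = P'" .
  qed
  have sub: "?f ` pauli_group n \<subseteq> pauli_group n"
  proof (rule image_subsetI)
    fix P assume "P \<in> pauli_group n" thus "?f P \<in> pauli_group n" by (rule c(4))
  qed
  have im: "?f ` pauli_group n = pauli_group n" by (rule endo_inj_surj[OF pg_finite sub inj])
  have "Q \<in> ?f ` pauli_group n" using Q by (subst im)
  then obtain Q' where "Q' \<in> pauli_group n" "Q = ?f Q'" by (rule imageE)
  thus ?thesis by (intro bexI[of _ Q']) simp_all
qed

lemma Zk_ket0: "pN n (zq k) *\<^sub>v ket0 n = ket0 n"
  by (rule pN_ket0) (simp add: zq_def)

lemma det_or_anti:
  assumes C: "clifford n C" and j: "j < n"
  shows "(\<exists>lam. pN n (zq j) *\<^sub>v (C *\<^sub>v ket0 n) = lam \<cdot>\<^sub>v (C *\<^sub>v ket0 n)) \<or>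
     (\<exists>g\<in>pauli_group n. dagger g = g \<and> g * g = 1\<^sub>m (2^n) \<and> g *\<^sub>v (C *\<^sub>v ket0 n) = C *\<^sub>v ket0 n \<and>
         g * pN n (zq j) = (-1) \<cdot>\<^sub>m (pN n (zq j) * g))"
proof -
  note c = cliffordD[OF C]
  let ?Z = "pN n (zq j)"
  let ?v = "ket0 n"
  obtain Q where Q: "Q \<in> pauli_group n" "C * Q * dagger C = ?Z" using clifford_preimage[OF C Z_pg] by blast
  obtain m p where p: "m < 4" "\<forall>l. p l < 4" "Q = \<i>^m \<cdot>\<^sub>m pN n p" using pg_elim[OF Q(1)] by blast
  have Qc: "Q \<in> carrier_mat (2^n) (2^n)" using pg_carrier[OF Q(1)] .
  have dC: "dagger C \<in> carrier_mat (2^n) (2^n)" using c(1) by simp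
  show ?thesis
  proof (cases "\<exists>k<n. pflip (p k)")
    case False
    have d: "p l = 0 \<or> p l = 3" if "l < n" for l
      using False that less4_cases[of "p l"] p(2) by (auto simp: pflip_def)
    have Qk: "Q *\<^sub>v ?v = \<i>^m \<cdot>\<^sub>v ?v"
      using p(3) d by (simp add: smult_mult_vec[of _ "2^n" "2^n"] pN_ket0)
    have "?Z *\<^sub>v (C *\<^sub>v ?v) = (C * Q * dagger C) *\<^sub>v (C *\<^sub>v ?v)" using Q(2) by simp
    also have "\<dots> = C *\<^sub>v (Q *\<^sub>v (dagger C *\<^sub>v (C *\<^sub>v ?v)))"
      using c(1) Qc dC by (simp add: matN[of _ "2^n"])
    also have "dagger C *\<^sub>v (C *\<^sub>v ?v) = ?v" using c(1,3) dC by (simp add: cancelLv[of _ "2^n"])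
    also have "C *\<^sub>v (Q *\<^sub>v ?v) = \<i>^m \<cdot>\<^sub>v (C *\<^sub>v ?v)" using Qk c(1) by (simp add: mult_mat_vec)
    finally show ?thesis by blast
  next
    case True
    then obtain k where k: "k < n" "pflip (p k)" by blast
    let ?K = "pN n (zq k)"
    define g where "g = C * ?K * dagger C"
    have Kc: "?K \<in> carrier_mat (2^n) (2^n)" by simp
    have gpg: "g \<in> pauli_group n" unfolding g_def by (rule c(4)[OF Z_pg])
    have "dagger g = dagger (dagger C) * dagger (C * ?K)"
      unfolding g_def by (rule dagger_mult[of _ "2^n" "2^n" _ "2^n"]) (use c(1) in simp_all)
    also have "dagger (C * ?K) = dagger ?K * dagger C" by (rule dagger_mult[of _ "2^n" "2^n" _ "2^n"]) (use c(1) in simp_all)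
    finally have gh: "dagger g = g" unfolding g_def using c(1) dC by (simp add: Z_herm matN[of _ "2^n"])
    have gg: "g * g = 1\<^sub>m (2^n)"
    proof -
      have "g * g = C * (?K * (dagger C * (C * (?K * dagger C))))"
        unfolding g_def using c(1) dC by (simp add: matN[of _ "2^n"])
      also have "dagger C * (C * (?K * dagger C)) = ?K * dagger C"
        using c(1,3) dC by (simp add: cancelL[of _ "2^n"] matN[of _ "2^n"])
      also have "?K * (?K * dagger C) = dagger C"
        using dC Z_sq by (simp add: cancelL[of _ "2^n"])
      finally show ?thesis using c(2) by simp
    qed
    have gv: "g *\<^sub>v (C *\<^sub>v ?v) = C *\<^sub>v ?v"
    proof -
      have "g *\<^sub>v (C *\<^sub>v ?v) = C *\<^sub>v (?K *\<^sub>v (dagger C *\<^sub>v (C *\<^sub>v ?v)))"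
        unfolding g_def using c(1) dC by (simp add: matN[of _ "2^n"])
      also have "dagger C *\<^sub>v (C *\<^sub>v ?v) = ?v" using c(1,3) dC by (simp add: cancelLv[of _ "2^n"])
      finally show ?thesis by (simp add: Zk_ket0)
    qed
    have KQ: "?K * Q = (-1) \<cdot>\<^sub>m (Q * ?K)"
    proof -
      have a: "?K * pN n p = (-1) \<cdot>\<^sub>m (pN n p * ?K)" using Z_anti[of k n p] k p(2) by blast
      have "?K * Q = \<i>^m \<cdot>\<^sub>m (?K * pN n p)" using p(3) by (simp add: smultR[of _ "2^n"])
      also have "\<dots> = \<i>^m \<cdot>\<^sub>m ((-1) \<cdot>\<^sub>m (pN n p * ?K))" by (simp only: a)
      also have "\<dots> = (-1) \<cdot>\<^sub>m (Q * ?K)" using p(3) by (simp add: smultL[of _ "2^n"] smult_smult_mat mult.commute)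
      finally show ?thesis .
    qed
    have KQ': "?K * (Q * dagger C) = (-1) \<cdot>\<^sub>m (Q * (?K * dagger C))"
    proof -
      have "?K * (Q * dagger C) = (?K * Q) * dagger C" using Qc dC by (simp add: assocN[of _ "2^n"])
      also have "\<dots> = ((-1) \<cdot>\<^sub>m (Q * ?K)) * dagger C" by (simp only: KQ)
      also have "\<dots> = (-1) \<cdot>\<^sub>m (Q * (?K * dagger C))" using Qc dC by (simp add: matN[of _ "2^n"])
      finally show ?thesis .
    qed
    have "g * ?Z = C * (?K * (Q * dagger C))"
    proof -
      have "g * ?Z = C * (?K * (dagger C * (C * (Q * dagger C))))"
        unfolding g_def Q(2)[symmetric] using c(1) dC Qc by (simp add: matN[of _ "2^n"])
      also have "dagger C * (C * (Q * dagger C)) = Q * dagger C"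
        using c(1,3) dC Qc by (simp add: cancelL[of _ "2^n"] matN[of _ "2^n"])
      finally show ?thesis .
    qed
    also have "\<dots> = (-1) \<cdot>\<^sub>m (C * (Q * (?K * dagger C)))" using KQ' c(1) dC Qc by (simp add: matN[of _ "2^n"])
    also have "C * (Q * (?K * dagger C)) = ?Z * g"
    proof -
      have "?Z * g = C * (Q * (dagger C * (C * (?K * dagger C))))"
        unfolding g_def Q(2)[symmetric] using c(1) dC Qc by (simp add: matN[of _ "2^n"])
      also have "dagger C * (C * (?K * dagger C)) = ?K * dagger C"
        using c(1,3) dC by (simp add: cancelL[of _ "2^n"] matN[of _ "2^n"])
      finally show ?thesis by simp
    qed
    finally show ?thesis using gpg gh gg gv by blast
  qed
qed

lemma pg_comm_s: assumes "P \<in> pauli_group n" "Q \<in> pauli_group n"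
  shows "\<exists>s. (s = 1 \<or> s = -1) \<and> P * Q = s \<cdot>\<^sub>m (Q * P)"
  using pg_comm[OF assms] by (metis one_smult_mat)

definition rt2 :: complex where "rt2 = complex_of_real (1 / sqrt 2)"

lemma rt2_sq: "rt2 * rt2 = 1/2"
proof -
  have "rt2 * rt2 = complex_of_real ((1/sqrt 2) * (1/sqrt 2))" by (simp only: rt2_def of_real_mult)
  also have "(1/sqrt 2) * (1/sqrt 2) = 1 / (sqrt 2 * sqrt 2)" by simp
  also have "sqrt 2 * sqrt 2 = (2::real)" by simp
  finally show ?thesis by simp
qed

lemma rt2_sq': "rt2 * (rt2 * x) = x / 2"
  using rt2_sq by (metis mult.assoc mult.commute divide_inverse mult_1 times_divide_eq_left)

lemma cnj_rt2[simp]: "cnj rt2 = rt2" by (simp add: rt2_def)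

lemma W_clifford:
  assumes g: "g \<in> pauli_group n" and h: "h \<in> pauli_group n"
    and gh: "dagger g = g" and hh: "dagger h = h"
    and gg: "g * g = 1\<^sub>m (2^n)" and h2: "h * h = 1\<^sub>m (2^n)"
    and anti: "g * h = (-1) \<cdot>\<^sub>m (h * g)"
  shows "clifford n (rt2 \<cdot>\<^sub>m (g + h))"
proof -
  let ?N = "2^n"
  let ?W = "rt2 \<cdot>\<^sub>m (g + h)"
  have gc: "g \<in> carrier_mat ?N ?N" and hc: "h \<in> carrier_mat ?N ?N" using g h pg_carrier by auto
  have Wc: "?W \<in> carrier_mat ?N ?N" using gc hc by simp
  have dW: "dagger ?W = ?W" using gc hc gh hh by (simp add: dagger_smult dagger_add[of _ ?N ?N])
  have hg: "h * g = (-1) \<cdot>\<^sub>m (g * h)" using anti gc hc by (simp add: smult_smult_mat one_smult_mat)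
  have WW: "?W * ?W = 1\<^sub>m ?N"
  proof -
    have "?W * ?W = rt2 \<cdot>\<^sub>m (rt2 \<cdot>\<^sub>m (g * g + h * g) + rt2 \<cdot>\<^sub>m (g * h + h * h))"
      using gc hc by (simp add: matN[of _ ?N] smult_smult_mat add_mult_distrib_mat[of _ ?N ?N] mult_add_distrib_mat[of _ ?N ?N])
    also have "\<dots> = 1\<^sub>m ?N"
      using gc hc by (intro eq_matI) (simp_all add: gg h2 anti algebra_simps rt2_sq')
    finally show ?thesis .
  qed
  have conj: "?W * P * dagger ?W \<in> pauli_group n" if P: "P \<in> pauli_group n" for P
  proof -
    have Pc: "P \<in> carrier_mat ?N ?N" using P pg_carrier by auto
    obtain s1 where s1: "s1 = 1 \<or> s1 = -1" "P * g = s1 \<cdot>\<^sub>m (g * P)" using pg_comm_s[OF P g] by blast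
    obtain s2 where s2: "s2 = 1 \<or> s2 = -1" "P * h = s2 \<cdot>\<^sub>m (h * P)" using pg_comm_s[OF P h] by blast
    let ?G = "g * (h * P)"
    have Gpg: "?G \<in> pauli_group n" using g h P by (intro pg_mult)
    have Gc: "?G \<in> carrier_mat ?N ?N" using gc hc Pc by simp
    have e1: "g * (P * g) = s1 \<cdot>\<^sub>m P"
    proof -
      have "g * (P * g) = s1 \<cdot>\<^sub>m ((g * g) * P)" using s1(2) gc Pc by (simp add: matN[of _ ?N])
      thus ?thesis using gg Pc by simp
    qed
    have e2: "g * (P * h) = s2 \<cdot>\<^sub>m ?G" using s2(2) gc hc Pc by (simp add: matN[of _ ?N])
    have e3: "h * (P * g) = (- s1) \<cdot>\<^sub>m ?G"
    proof -
      have "h * (P * g) = s1 \<cdot>\<^sub>m ((h * g) * P)" using s1(2) gc hc Pc by (simp add: matN[of _ ?N])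
      also have "\<dots> = (- s1) \<cdot>\<^sub>m ?G" using hg gc hc Pc by (simp add: matN[of _ ?N] smult_smult_mat)
      finally show ?thesis .
    qed
    have e4: "h * (P * h) = s2 \<cdot>\<^sub>m P"
    proof -
      have "h * (P * h) = s2 \<cdot>\<^sub>m ((h * h) * P)" using s2(2) hc Pc by (simp add: matN[of _ ?N])
      thus ?thesis using h2 Pc by simp
    qed
    have "?W * P * dagger ?W = rt2 \<cdot>\<^sub>m (rt2 \<cdot>\<^sub>m (g * (P * g) + h * (P * g)) + rt2 \<cdot>\<^sub>m (g * (P * h) + h * (P * h)))"
      unfolding dW using gc hc Pc
      by (simp add: matN[of _ ?N] smult_smult_mat add_mult_distrib_mat[of _ ?N ?N] mult_add_distrib_mat[of _ ?N ?N])
    also have "\<dots> = rt2 \<cdot>\<^sub>m (rt2 \<cdot>\<^sub>m (s1 \<cdot>\<^sub>m P + (- s1) \<cdot>\<^sub>m ?G) + rt2 \<cdot>\<^sub>m (s2 \<cdot>\<^sub>m ?G + s2 \<cdot>\<^sub>m P))"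
      by (simp only: e1 e2 e3 e4)
    finally have W: "?W * P * dagger ?W = rt2 \<cdot>\<^sub>m (rt2 \<cdot>\<^sub>m (s1 \<cdot>\<^sub>m P + (- s1) \<cdot>\<^sub>m ?G) + rt2 \<cdot>\<^sub>m (s2 \<cdot>\<^sub>m ?G + s2 \<cdot>\<^sub>m P))" .
    have dims: "dim_row P = ?N" "dim_col P = ?N" "dim_row ?G = ?N" "dim_col ?G = ?N"
      using Pc Gc by auto
    show ?thesis
    proof (cases "s1 = s2")
      case True
      have "?W * P * dagger ?W = s1 \<cdot>\<^sub>m P" unfolding W
        using dims True by (intro eq_matI) (simp_all add: rt2_sq' algebra_simps)
      thus ?thesis using s1(1) P pg_neg by (auto simp: one_smult_mat)
    next
      case False
      hence s: "s2 = - s1" using s1(1) s2(1) by auto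
      have "?W * P * dagger ?W = s2 \<cdot>\<^sub>m ?G" unfolding W
        using dims s by (intro eq_matI) (simp_all add: rt2_sq' algebra_simps)
      thus ?thesis using s2(1) Gpg pg_neg by (auto simp: one_smult_mat)
    qed
  qed
  show ?thesis using Wc WW dW conj by (simp add: clifford_def unitary_mat_def)
qed

definition proj1 :: "bool \<Rightarrow> complex mat" where
  "proj1 b = (if b then m2 0 0 0 1 else m2 1 0 0 0)"

definition Pj :: "nat \<Rightarrow> nat \<Rightarrow> bool \<Rightarrow> complex mat" where
  "Pj n j b = ntensor n (\<lambda>l. if l = j then proj1 b else 1\<^sub>m 2)"

lemma Pj_carrier[simp]: "Pj n j b \<in> carrier_mat (2^n) (2^n)" by (simp add: Pj_def)
lemma Pj_dims[simp]: "dim_row (Pj n j b) = 2^n" "dim_col (Pj n j b) = 2^n" by (simp_all add: Pj_def)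

lemma Pj_vec: assumes v: "v \<in> carrier_vec (2^n)" and j: "j < n" and r: "r < 2^n"
  shows "(Pj n j b *\<^sub>v v) $ r = (if bit r j = b then v $ r else 0)"
proof -
  have "(Pj n j b *\<^sub>v v) $ r = (\<Prod>l<n. ent (if l = j then proj1 b else 1\<^sub>m 2) (bit r l) (bit r l)) * v $ r"
    unfolding Pj_def
    by (rule nt_mult_vec_diag[OF _ _ v r]) (auto simp: proj1_def m2_one)
  also have "(\<Prod>l<n. ent (if l = j then proj1 b else 1\<^sub>m 2) (bit r l) (bit r l)) = ent (proj1 b) (bit r j) (bit r j)"
    by (rule trans[OF prod_delta1[OF _ j]]) (auto simp: m2_one)
  finally show ?thesis by (auto simp: proj1_def)
qed

lemma mat_vec_index_lin: assumes "A \<in> carrier_mat N N" "B \<in> carrier_mat N N" "v \<in> carrier_vec N" "r < N"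
  shows "((c \<cdot>\<^sub>m (A + B)) *\<^sub>v v) $ r = c * ((A *\<^sub>v v) $ r + (B *\<^sub>v v) $ r)"
  using assms by (simp add: smult_mult_vec[of _ N N] add_mult_distrib_mat_vec[of _ N N])

lemma smult_mat_vec_index: assumes "A \<in> carrier_mat N N" "v \<in> carrier_vec N" "r < N"
  shows "((c \<cdot>\<^sub>m A) *\<^sub>v v) $ r = c * (A *\<^sub>v v) $ r"
  using assms by (simp add: smult_mult_vec[of _ N N])

lemma split_lemma:
  assumes st: "stabilizer_state n \<phi>" and j: "j < n"
  shows "(\<exists>lam. pN n (zq j) *\<^sub>v \<phi> = lam \<cdot>\<^sub>v \<phi>) \<or>
     (\<exists>g\<in>pauli_group n. g *\<^sub>v \<phi> = \<phi> \<and> g * pN n (zq j) = (-1) \<cdot>\<^sub>m (pN n (zq j) * g) \<and>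
        (\<forall>b. \<exists>\<phi>'. stabilizer_state n \<phi>' \<and> Pj n j b *\<^sub>v \<phi> = rt2 \<cdot>\<^sub>v \<phi>'))"
proof -
  obtain C where C: "clifford n C" "\<phi> = C *\<^sub>v ket0 n" using st by (auto simp: stabilizer_state_def)
  have vc: "\<phi> \<in> carrier_vec (2^n)" using stab_carrier[OF st] .
  let ?Z = "pN n (zq j)"
  from det_or_anti[OF C(1) j] C(2)
  have "(\<exists>lam. ?Z *\<^sub>v \<phi> = lam \<cdot>\<^sub>v \<phi>) \<or>
     (\<exists>g\<in>pauli_group n. dagger g = g \<and> g * g = 1\<^sub>m (2^n) \<and> g *\<^sub>v \<phi> = \<phi> \<and> g * ?Z = (-1) \<cdot>\<^sub>m (?Z * g))"
    by simp
  thus ?thesis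
  proof
    assume "\<exists>g\<in>pauli_group n. dagger g = g \<and> g * g = 1\<^sub>m (2^n) \<and> g *\<^sub>v \<phi> = \<phi> \<and> g * ?Z = (-1) \<cdot>\<^sub>m (?Z * g)"
    then obtain g where g: "g \<in> pauli_group n" "dagger g = g" "g * g = 1\<^sub>m (2^n)" "g *\<^sub>v \<phi> = \<phi>"
      "g * ?Z = (-1) \<cdot>\<^sub>m (?Z * g)" by blast
    have gc: "g \<in> carrier_mat (2^n) (2^n)" using pg_carrier[OF g(1)] .
    have Zc: "?Z \<in> carrier_mat (2^n) (2^n)" by simp
    have "\<exists>\<phi>'. stabilizer_state n \<phi>' \<and> Pj n j b *\<^sub>v \<phi> = rt2 \<cdot>\<^sub>v \<phi>'" for b
    proof -
      define s :: complex where "s = (if b then -1 else 1)"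
      define h where "h = s \<cdot>\<^sub>m ?Z"
      have hc: "h \<in> carrier_mat (2^n) (2^n)" by (simp add: h_def)
      have s2: "s * s = 1" "cnj s = s" by (auto simp: s_def)
      have hpg: "h \<in> pauli_group n"
        unfolding h_def s_def using Z_pg pg_neg by (auto simp: one_smult_mat)
      have hh: "dagger h = h" unfolding h_def by (simp add: dagger_smult Z_herm s2)
      have h2: "h * h = 1\<^sub>m (2^n)" unfolding h_def using Zc
        by (simp add: smultL[of _ "2^n"] smultR[of _ "2^n"] smult_smult_mat Z_sq s2 one_smult_mat)
      have anti: "g * h = (-1) \<cdot>\<^sub>m (h * g)" unfolding h_def using Zc gc g(5)
        by (simp add: smultL[of _ "2^n"] smultR[of _ "2^n"] smult_smult_mat mult.commute)
      let ?W = "rt2 \<cdot>\<^sub>m (g + h)"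
      have W: "clifford n ?W" by (rule W_clifford[OF g(1) hpg g(2) hh g(3) h2 anti])
      have "Pj n j b *\<^sub>v \<phi> = rt2 \<cdot>\<^sub>v (?W *\<^sub>v \<phi>)"
      proof (rule eq_vecI)
        fix r assume "r < dim_vec (rt2 \<cdot>\<^sub>v (?W *\<^sub>v \<phi>))"
        hence r: "r < 2^n" using gc hc by simp
        have "(rt2 \<cdot>\<^sub>v (?W *\<^sub>v \<phi>)) $ r = rt2 * (rt2 * ((g *\<^sub>v \<phi>) $ r + (h *\<^sub>v \<phi>) $ r))"
          using r gc hc vc by (simp add: add_scalar_prod_distrib[of _ "2^n"])
        also have "(h *\<^sub>v \<phi>) $ r = s * ((if bit r j then -1 else 1) * \<phi> $ r)"
          unfolding h_def by (simp only: smult_mat_vec_index[OF Zc vc r] Z_vec[OF vc j r])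
        also have "(g *\<^sub>v \<phi>) $ r = \<phi> $ r" using g(4) by simp
        finally show "(Pj n j b *\<^sub>v \<phi>) $ r = (rt2 \<cdot>\<^sub>v (?W *\<^sub>v \<phi>)) $ r"
          unfolding Pj_vec[OF vc j r] by (simp add: rt2_sq' s_def algebra_simps)
      qed (simp add: carrier_matD[OF hc])
      moreover have "stabilizer_state n (?W *\<^sub>v \<phi>)" by (rule stab_clifford[OF W st])
      ultimately show ?thesis by blast
    qed
    thus ?thesis using g by blast
  qed blast
qed

lemma proj_stab:
  assumes st: "stabilizer_state n \<phi>" and j: "j < n"
  shows "\<exists>a \<phi>'. stabilizer_state n \<phi>' \<and> Pj n j b *\<^sub>v \<phi> = a \<cdot>\<^sub>v \<phi>'"
proof -
  have vc: "\<phi> \<in> carrier_vec (2^n)" using stab_carrier[OF st] .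
  from split_lemma[OF st j] show ?thesis
  proof
    assume "\<exists>lam. pN n (zq j) *\<^sub>v \<phi> = lam \<cdot>\<^sub>v \<phi>"
    then obtain lam where lam: "pN n (zq j) *\<^sub>v \<phi> = lam \<cdot>\<^sub>v \<phi>" by blast
    define s :: complex where "s = (if b then -1 else 1)"
    have "Pj n j b *\<^sub>v \<phi> = ((1 + s * lam) / 2) \<cdot>\<^sub>v \<phi>"
    proof (rule eq_vecI)
      fix r assume "r < dim_vec (((1 + s * lam) / 2) \<cdot>\<^sub>v \<phi>)"
      hence r: "r < 2^n" using vc by simp
      have "(pN n (zq j) *\<^sub>v \<phi>) $ r = lam * \<phi> $ r" using lam r vc by simp
      hence h': "lam * \<phi> $ r = (if bit r j then -1 else 1) * \<phi> $ r" using Z_vec[OF vc j r] by metis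
      have "(((1 + s * lam) / 2) \<cdot>\<^sub>v \<phi>) $ r = (\<phi> $ r + s * (lam * \<phi> $ r)) / 2"
        using r vc by (simp add: field_simps)
      also have "\<dots> = (\<phi> $ r + s * ((if bit r j then -1 else 1) * \<phi> $ r)) / 2" by (simp only: h')
      finally show "(Pj n j b *\<^sub>v \<phi>) $ r = (((1 + s * lam) / 2) \<cdot>\<^sub>v \<phi>) $ r"
        unfolding Pj_vec[OF vc j r] by (cases "bit r j"; cases b) (auto simp: s_def)
    qed (simp add: carrier_vecD[OF vc])
    thus ?thesis using st by blast
  next
    assume "\<exists>g\<in>pauli_group n. g *\<^sub>v \<phi> = \<phi> \<and> g * pN n (zq j) = (-1) \<cdot>\<^sub>m (pN n (zq j) * g) \<and>
        (\<forall>b. \<exists>\<phi>'. stabilizer_state n \<phi>' \<and> Pj n j b *\<^sub>v \<phi> = rt2 \<cdot>\<^sub>v \<phi>')"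
    thus ?thesis by blast
  qed
qed

lemma bool_cancel[simp]: "((a = (\<not> b)) = (\<not> b)) = (a::bool)" by auto

lemma xor_xor_cancel: "xor (xor r s) s = (r::nat)"
  by (rule bit_eqI) (simp add: bit_xor_iff)

declare index_mult_mat_vec[simp del]

definition Ek :: "real \<Rightarrow> bool \<Rightarrow> complex mat" where
  "Ek g b = (if b then AD_K1 g else AD_K0 g)"

lemma Ek_carrier[simp]: "Ek g b \<in> carrier_mat 2 2" by (simp add: Ek_def AD_m2)

lemma ent_Ek: "ent (Ek g b) x y =
  (if b then (if \<not> x \<and> y then complex_of_real (sqrt g) else 0)
   else (if x = y then (if x then complex_of_real (sqrt (1-g)) else 1) else 0))"
  by (auto simp: Ek_def AD_m2)

lemma kraus_def': "AD_kraus n g s = ntensor n (\<lambda>j. Ek g (bit s j))"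
  by (simp add: AD_kraus_def Ek_def)

lemma kraus_carrier[simp]: "AD_kraus n g s \<in> carrier_mat (2^n) (2^n)"
  by (simp add: AD_kraus_def)
lemma kraus_dims[simp]: "dim_row (AD_kraus n g s) = 2^n" "dim_col (AD_kraus n g s) = 2^n"
  by (simp_all add: AD_kraus_def)

definition kap :: "nat \<Rightarrow> real \<Rightarrow> nat \<Rightarrow> nat \<Rightarrow> complex" where
  "kap n g s r = (\<Prod>j<n. ent (Ek g (bit s j)) (bit r j) (bit r j \<noteq> bit s j))"

lemma kraus_vec: assumes v: "v \<in> carrier_vec (2^n)" and s: "s < 2^n" and r: "r < 2^n"
  shows "(AD_kraus n g s *\<^sub>v v) $ r = kap n g s r * v $ (xor r s)"
  unfolding kraus_def' kap_def
  by (rule nt_mult_vec_mono[OF _ _ s v r]) (auto simp: ent_Ek)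

definition vnorm2 :: "nat \<Rightarrow> complex vec \<Rightarrow> real" where
  "vnorm2 n v = (\<Sum>r<2^n. (cmod (v $ r))^2)"

lemma xor_bij: "s < 2^n \<Longrightarrow> (\<Sum>r\<in>{..<(2::nat)^n}. f (xor r s)) = (\<Sum>x\<in>{..<(2::nat)^n}. f x)"
  by (rule sum.reindex_bij_witness[of _ "\<lambda>x. xor x s" "\<lambda>x. xor x s"]) (auto simp: xor_xor_cancel xor_lt)

lemma reidx: "s < 2^n \<Longrightarrow> (\<Sum>r\<in>{..<(2::nat)^n}. A r * B (xor r s)) = (\<Sum>x\<in>{..<(2::nat)^n}. A (xor x s) * B x)"
  using xor_bij[of s n "\<lambda>x. A (xor x s) * B x"] by (simp add: xor_xor_cancel)

lemma kap_norm_sum: assumes g: "0 \<le> g" "g \<le> 1"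
  shows "(\<Sum>s\<in>{..<(2::nat)^n}. (cmod (kap n g s (xor x s)))^2) = 1"
proof -
  let ?F = "\<lambda>j b. (cmod (ent (Ek g b) (bit x j \<noteq> b) (bit x j)))^2"
  have "(\<Sum>s\<in>{..<(2::nat)^n}. (cmod (kap n g s (xor x s)))^2) = (\<Sum>s\<in>{..<(2::nat)^n}. \<Prod>j<n. ?F j (bit s j))"
  proof (intro sum.cong refl)
    fix s
    have "(cmod (kap n g s (xor x s)))^2 = (\<Prod>j<n. cmod (ent (Ek g (bit s j)) (bit x j \<noteq> bit s j) (bit x j)))^2"
      by (simp add: kap_def bit_xor_iff prod_norm)
    also have "\<dots> = (\<Prod>j<n. ?F j (bit s j))" by (simp add: prod_power_distrib)
    finally show "(cmod (kap n g s (xor x s)))^2 = (\<Prod>j<n. ?F j (bit s j))" .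
  qed
  also have "\<dots> = (\<Prod>j<n. ?F j False + ?F j True)" by (rule bitsum)
  also have "\<dots> = 1" using g by (intro prod.neutral) (auto simp: ent_Ek)
  finally show ?thesis .
qed

lemma trace_pres: assumes g: "0 \<le> g" "g \<le> 1" and v: "v \<in> carrier_vec (2^n)"
  shows "(\<Sum>s<2^n. vnorm2 n (AD_kraus n g s *\<^sub>v v)) = vnorm2 n v"
proof -
  have "(\<Sum>s<2^n. vnorm2 n (AD_kraus n g s *\<^sub>v v))
      = (\<Sum>s\<in>{..<(2::nat)^n}. \<Sum>r\<in>{..<(2::nat)^n}. (cmod (kap n g s r))^2 * (cmod (v $ (xor r s)))^2)"
    unfolding vnorm2_def by (intro sum.cong refl) (simp add: kraus_vec[OF v] norm_mult power_mult_distrib)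
  also have "\<dots> = (\<Sum>s\<in>{..<(2::nat)^n}. \<Sum>x\<in>{..<(2::nat)^n}. (cmod (kap n g s (xor x s)))^2 * (cmod (v $ x))^2)"
    by (intro sum.cong refl reidx) simp
  also have "\<dots> = (\<Sum>x\<in>{..<(2::nat)^n}. (cmod (v $ x))^2 * (\<Sum>s\<in>{..<(2::nat)^n}. (cmod (kap n g s (xor x s)))^2))"
    by (subst sum.swap) (simp add: sum_distrib_left mult.commute)
  also have "\<dots> = vnorm2 n v" using kap_norm_sum[OF g] by (simp add: vnorm2_def)
  finally show ?thesis .
qed

lemma proj_index: "r < dim_vec v \<Longrightarrow> c < dim_vec v \<Longrightarrow> proj v $$ (r,c) = v $ r * cnj (v $ c)"
  by (simp add: proj_def)

lemma proj_carrier[simp]: "v \<in> carrier_vec N \<Longrightarrow> proj v \<in> carrier_mat N N"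
  by (simp add: proj_def carrier_vecD)

lemma kraus_proj: assumes K: "K \<in> carrier_mat N N" and v: "v \<in> carrier_vec N"
  shows "K * proj v * dagger K = proj (K *\<^sub>v v)"
proof (rule eq_matI)
  fix r c assume rc: "r < dim_row (proj (K *\<^sub>v v))" "c < dim_col (proj (K *\<^sub>v v))"
  hence r: "r < N" and c: "c < N" using K by (auto simp: proj_def)
  have KP: "(K * proj v) $$ (r,l) = (K *\<^sub>v v) $ r * cnj (v $ l)" if l: "l < N" for l
    using K v r l by (simp add: proj_def scalar_prod_def row_def col_def sum_distrib_right mult.assoc index_mult_mat_vec)
  have "(K * proj v * dagger K) $$ (r,c) = (\<Sum>l<N. (K * proj v) $$ (r,l) * dagger K $$ (l,c))"
    using K v r c by (simp add: scalar_prod_def row_def col_def atLeast0LessThan proj_def carrier_vecD)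
  also have "\<dots> = (\<Sum>l<N. (K *\<^sub>v v) $ r * cnj (v $ l) * cnj (K $$ (c,l)))"
    using K c by (intro sum.cong refl) (simp add: KP dagger_index)
  also have "\<dots> = (K *\<^sub>v v) $ r * cnj ((K *\<^sub>v v) $ c)"
    using K v c by (simp add: scalar_prod_def row_def sum_distrib_left atLeast0LessThan index_mult_mat_vec; intro sum.cong refl; simp add: ac_simps)
  also have "\<dots> = proj (K *\<^sub>v v) $$ (r,c)" using K r c by (simp add: proj_def)
  finally show "(K * proj v * dagger K) $$ (r,c) = proj (K *\<^sub>v v) $$ (r,c)" .
qed (use K v in \<open>auto simp: proj_def\<close>)

lemma channel_entry: assumes v: "v \<in> carrier_vec (2^n)" and r: "r < 2^n" and c: "c < 2^n"
  shows "AD_channel n g (proj v) $$ (r,c) =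
    (\<Sum>s<2^n. (AD_kraus n g s *\<^sub>v v) $ r * cnj ((AD_kraus n g s *\<^sub>v v) $ c))"
  using r c v by (simp add: AD_channel_def kraus_proj[OF kraus_carrier v] proj_index)

lemma stab_index: assumes C: "clifford n C" and r: "r < 2^n"
  shows "(C *\<^sub>v ket0 n) $ r = C $$ (r, 0)"
  using cliffordD(1)[OF C] r by (simp add: index_mult_mat_vec ket0_def scalar_prod_right_unit)

lemma cnj_mult_self: "cnj z * z = complex_of_real ((cmod z)^2)"
  using complex_norm_square[of z] by (simp add: mult.commute)

lemma stab_norm: assumes st: "stabilizer_state n \<phi>" shows "vnorm2 n \<phi> = 1"
proof -
  obtain C where C: "clifford n C" "\<phi> = C *\<^sub>v ket0 n" using st by (auto simp: stabilizer_state_def)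
  note c = cliffordD[OF C(1)]
  have "complex_of_real (vnorm2 n \<phi>) = (\<Sum>r<2^n. cnj (C $$ (r,0)) * C $$ (r,0))"
    unfolding vnorm2_def C(2) by (simp add: stab_index[OF C(1)] cnj_mult_self)
  also have "\<dots> = (dagger C * C) $$ (0,0)"
    using c(1) by (simp add: scalar_prod_def row_def col_def dagger_def atLeast0LessThan)
  also have "\<dots> = 1" using c(3) by simp
  finally show ?thesis by (simp add: of_real_eq_1_iff)
qed

lemma vnorm2_smult: "v \<in> carrier_vec (2^n) \<Longrightarrow> vnorm2 n (a \<cdot>\<^sub>v v) = (cmod a)^2 * vnorm2 n v"
  by (simp add: vnorm2_def norm_mult power_mult_distrib sum_distrib_left)

lemma assemble:
  assumes g: "0 \<le> g" "g \<le> 1" and v: "v \<in> carrier_vec (2^n)" and nv: "vnorm2 n v = 1"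
    and dec: "\<And>s. s < 2^n \<Longrightarrow> \<exists>a \<phi>. stabilizer_state n \<phi> \<and> AD_kraus n g s *\<^sub>v v = a \<cdot>\<^sub>v \<phi>"
  shows "AD_channel n g (proj v) \<in> stab_polytope n"
proof -
  have "\<forall>s. \<exists>x. s < 2^n \<longrightarrow> stabilizer_state n (snd x) \<and> AD_kraus n g s *\<^sub>v v = fst x \<cdot>\<^sub>v snd x"
    using dec by force
  then obtain f where f: "\<And>s. s < 2^n \<Longrightarrow> stabilizer_state n (snd (f s)) \<and> AD_kraus n g s *\<^sub>v v = fst (f s) \<cdot>\<^sub>v snd (f s)"
    by (metis choice)
  define A where "A s = fst (f s)" for s
  define \<Phi> where "\<Phi> s = snd (f s)" for s
  have st: "\<And>s. s < 2^n \<Longrightarrow> stabilizer_state n (\<Phi> s)" and K: "\<And>s. s < 2^n \<Longrightarrow> AD_kraus n g s *\<^sub>v v = A s \<cdot>\<^sub>v \<Phi> s"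
    using f by (auto simp: A_def \<Phi>_def)
  have Pc: "\<And>s. s < 2^n \<Longrightarrow> \<Phi> s \<in> carrier_vec (2^n)" using st stab_carrier by auto
  define p where "p s = (cmod (A s))^2" for s
  have p0: "\<forall>i<2^n. p i \<ge> 0 \<and> stabilizer_state n (\<Phi> i)" using st by (auto simp: p_def)
  have "(\<Sum>i<2^n. p i) = (\<Sum>s<2^n. vnorm2 n (AD_kraus n g s *\<^sub>v v))"
    by (intro sum.cong refl) (simp add: K vnorm2_smult Pc stab_norm st p_def)
  also have "\<dots> = 1" using trace_pres[OF g v] nv by simp
  finally have p1: "(\<Sum>i<2^n. p i) = 1" .
  have eq: "AD_channel n g (proj v) = mat (2^n) (2^n) (\<lambda>(r,c). \<Sum>i<2^n. complex_of_real (p i) * proj (\<Phi> i) $$ (r,c))"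
  proof (rule eq_matI)
    fix r c assume "r < dim_row (mat (2^n) (2^n) (\<lambda>(r,c). \<Sum>i<2^n. complex_of_real (p i) * proj (\<Phi> i) $$ (r,c)))"
      "c < dim_col (mat (2^n) (2^n) (\<lambda>(r,c). \<Sum>i<2^n. complex_of_real (p i) * proj (\<Phi> i) $$ (r,c)))"
    hence r: "r < 2^n" and c: "c < 2^n" by auto
    have "AD_channel n g (proj v) $$ (r,c) = (\<Sum>s<2^n. (AD_kraus n g s *\<^sub>v v) $ r * cnj ((AD_kraus n g s *\<^sub>v v) $ c))"
      by (rule channel_entry[OF v r c])
    also have "\<dots> = (\<Sum>i<2^n. complex_of_real (p i) * proj (\<Phi> i) $$ (r,c))"
    proof (intro sum.cong refl)
      fix s assume "s \<in> {..<(2::nat)^n}"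
      hence s: "s < 2^n" by simp
      have "(AD_kraus n g s *\<^sub>v v) $ r * cnj ((AD_kraus n g s *\<^sub>v v) $ c)
          = (cnj (A s) * A s) * (\<Phi> s $ r * cnj (\<Phi> s $ c))"
        using K[OF s] Pc[OF s] r c by simp
      also have "\<dots> = complex_of_real (p s) * proj (\<Phi> s) $$ (r,c)"
        using Pc[OF s] r c by (simp add: cnj_mult_self p_def proj_index)
      finally show "(AD_kraus n g s *\<^sub>v v) $ r * cnj ((AD_kraus n g s *\<^sub>v v) $ c) = complex_of_real (p s) * proj (\<Phi> s) $$ (r,c)" .
    qed
    finally show "AD_channel n g (proj v) $$ (r,c) = mat (2^n) (2^n) (\<lambda>(r,c). \<Sum>i<2^n. complex_of_real (p i) * proj (\<Phi> i) $$ (r,c)) $$ (r,c)"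
      using r c by simp
  qed (simp_all add: AD_channel_def)
  show ?thesis unfolding stab_polytope_def
    by (rule CollectI, rule exI[of _ "2^n"], rule exI[of _ p], rule exI[of _ \<Phi>]) (use p0 p1 eq in auto)
qed

lemma nonzero_bit: "(r::nat) < 2^n \<Longrightarrow> r \<noteq> 0 \<Longrightarrow> \<exists>j<n. bit r j"
  using bits_eqI[of r n 0] by auto

lemma prod_bits_zero: assumes r: "(r::nat) < 2^n"
  shows "(\<Prod>j<n. (if bit r j then 0 else 1::complex)) = (if r = 0 then 1 else 0)"
proof (cases "r = 0")
  case False
  then obtain j where "j < n" "bit r j" using nonzero_bit[OF r] by blast
  thus ?thesis using False by (intro trans[OF prod_zero]) (auto intro!: bexI[of _ j])
qed simp

lemma kraus1: assumes v: "v \<in> carrier_vec (2^n)" and s: "s < 2^n"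
  shows "AD_kraus n 1 s *\<^sub>v v = (v $ s) \<cdot>\<^sub>v ket0 n"
proof (rule eq_vecI)
  fix r assume "r < dim_vec ((v $ s) \<cdot>\<^sub>v ket0 n)"
  hence r: "r < 2^n" by simp
  have "kap n 1 s r = (\<Prod>j<n. (if bit r j then 0 else 1))"
    unfolding kap_def by (intro prod.cong refl) (auto simp: ent_Ek)
  thus "(AD_kraus n 1 s *\<^sub>v v) $ r = ((v $ s) \<cdot>\<^sub>v ket0 n) $ r"
    using r by (simp add: kraus_vec[OF v s r] prod_bits_zero ket0_index)
qed simp

lemma kraus0: assumes v: "v \<in> carrier_vec (2^n)" and s: "s < 2^n"
  shows "AD_kraus n 0 s *\<^sub>v v = (if s = 0 then 1 else 0) \<cdot>\<^sub>v v"
proof (rule eq_vecI)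
  fix r assume "r < dim_vec ((if s = 0 then 1 else 0) \<cdot>\<^sub>v v)"
  hence r: "r < 2^n" using v by simp
  have "kap n 0 s r = (\<Prod>j<n. (if bit s j then 0 else 1))"
    unfolding kap_def by (intro prod.cong refl) (auto simp: ent_Ek)
  thus "(AD_kraus n 0 s *\<^sub>v v) $ r = ((if s = 0 then 1 else 0) \<cdot>\<^sub>v v) $ r"
    using r v by (simp add: kraus_vec[OF v s r] prod_bits_zero[OF s])
qed (use v in simp)

lemma channel0: assumes st: "stabilizer_state n \<psi>"
  shows "AD_channel n 0 (proj \<psi>) \<in> stab_polytope n"
proof -
  have v: "\<psi> \<in> carrier_vec (2^n)" using stab_carrier[OF st] .
  show ?thesis
  proof (rule assemble[OF _ _ v stab_norm[OF st]])
    fix s :: nat assume "s < 2^n"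
    thus "\<exists>a \<phi>. stabilizer_state n \<phi> \<and> AD_kraus n 0 s *\<^sub>v \<psi> = a \<cdot>\<^sub>v \<phi>"
      using st by (intro exI[of _ "if s = 0 then 1 else 0"] exI[of _ \<psi>]) (simp add: kraus0[OF v])
  qed simp_all
qed

lemma channel1: assumes st: "stabilizer_state n \<psi>"
  shows "AD_channel n 1 (proj \<psi>) \<in> stab_polytope n"
proof -
  have v: "\<psi> \<in> carrier_vec (2^n)" using stab_carrier[OF st] .
  show ?thesis
    by (rule assemble[OF _ _ v stab_norm[OF st]]) (use stab_ket0 in \<open>auto simp: kraus1[OF v]\<close>)
qed

lemma hw_disj: assumes d: "\<And>j. j < n \<Longrightarrow> bit s j \<Longrightarrow> \<not> bit r j"
  shows "hamming_weight n (xor r s) = hamming_weight n r + hamming_weight n s"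
proof -
  have "{j. j < n \<and> bit (xor r s) j} = {j. j < n \<and> bit r j} \<union> {j. j < n \<and> bit s j}"
    using d by (auto simp: bit_xor_iff)
  moreover have "{j. j < n \<and> bit r j} \<inter> {j. j < n \<and> bit s j} = {}" using d by auto
  moreover have "finite {j. j < n \<and> bit r j}" "finite {j. j < n \<and> bit s j}" by auto
  ultimately show ?thesis unfolding hamming_weight_def by (simp add: card_Un_disjoint)
qed

lemma prod_if_pow: "(\<Prod>j<(n::nat). (if P j then a else 1)) = (a::complex) ^ card {j. j < n \<and> P j}"
proof -
  have "(\<Prod>j<n. (if P j then a else 1)) = (\<Prod>j\<in>{j. j < n \<and> P j}. a)"
    by (rule prod.mono_neutral_cong_right) auto
  thus ?thesis by simp
qed

lemma kap_disj: assumes d: "\<And>j. j < n \<Longrightarrow> bit s j \<Longrightarrow> \<not> bit r j"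
  shows "kap n g s r = complex_of_real (sqrt g) ^ hamming_weight n s * complex_of_real (sqrt (1-g)) ^ hamming_weight n r"
proof -
  have "kap n g s r = (\<Prod>j<n. (if bit s j then complex_of_real (sqrt g) else 1) * (if bit r j then complex_of_real (sqrt (1-g)) else 1))"
    unfolding kap_def using d by (intro prod.cong refl) (auto simp: ent_Ek)
  thus ?thesis by (simp add: prod.distrib prod_if_pow hamming_weight_def)
qed

lemma kap_nondisj: assumes "j < n" "bit s j" "bit r j" shows "kap n g s r = 0"
  unfolding kap_def using assms by (intro prod_zero) (auto simp: ent_Ek intro!: bexI[of _ j])

definition Mop :: "nat \<Rightarrow> nat \<Rightarrow> complex mat" where
  "Mop n s = ntensor n (\<lambda>j. if bit s j then m2 0 1 0 0 else 1\<^sub>m 2)"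

lemma Mop_carrier[simp]: "Mop n s \<in> carrier_mat (2^n) (2^n)" by (simp add: Mop_def)
lemma Mop_dims[simp]: "dim_row (Mop n s) = 2^n" "dim_col (Mop n s) = 2^n" by (simp_all add: Mop_def)

lemma Mop_vec: assumes v: "v \<in> carrier_vec (2^n)" and s: "s < 2^n" and r: "r < 2^n"
  shows "(Mop n s *\<^sub>v v) $ r = (if (\<forall>j<n. bit s j \<longrightarrow> \<not> bit r j) then 1 else 0) * v $ (xor r s)"
proof -
  have "(Mop n s *\<^sub>v v) $ r = (\<Prod>j<n. ent (if bit s j then m2 0 1 0 0 else 1\<^sub>m 2) (bit r j) (bit r j \<noteq> bit s j)) * v $ (xor r s)"
    unfolding Mop_def by (rule nt_mult_vec_mono[OF _ _ s v r]) (auto simp: m2_one)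
  also have "(\<Prod>j<n. ent (if bit s j then m2 0 1 0 0 else 1\<^sub>m 2) (bit r j) (bit r j \<noteq> bit s j))
     = (if (\<forall>j<n. bit s j \<longrightarrow> \<not> bit r j) then 1 else 0)"
  proof (cases "\<forall>j<n. bit s j \<longrightarrow> \<not> bit r j")
    case True thus ?thesis by (intro trans[OF prod.neutral]) (auto simp: m2_one)
  next
    case False
    then obtain j where "j < n" "bit s j" "bit r j" by blast
    thus ?thesis using False by (intro trans[OF prod_zero]) (auto simp: m2_one intro!: bexI[of _ j])
  qed
  finally show ?thesis .
qed

lemma kraus_cw:
  assumes v: "v \<in> carrier_vec (2^n)" and s: "s < 2^n"
    and cw: "\<And>x. x < 2^n \<Longrightarrow> v $ x \<noteq> 0 \<Longrightarrow> hamming_weight n x = w"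
  shows "AD_kraus n g s *\<^sub>v v =
    (complex_of_real (sqrt g) ^ hamming_weight n s * complex_of_real (sqrt (1-g)) ^ (w - hamming_weight n s)) \<cdot>\<^sub>v (Mop n s *\<^sub>v v)"
proof (rule eq_vecI)
  fix r assume "r < dim_vec ((complex_of_real (sqrt g) ^ hamming_weight n s * complex_of_real (sqrt (1-g)) ^ (w - hamming_weight n s)) \<cdot>\<^sub>v (Mop n s *\<^sub>v v))"
  hence r: "r < 2^n" by simp
  have x: "xor r s < 2^n" using xor_lt[OF r s] .
  show "(AD_kraus n g s *\<^sub>v v) $ r = ((complex_of_real (sqrt g) ^ hamming_weight n s * complex_of_real (sqrt (1-g)) ^ (w - hamming_weight n s)) \<cdot>\<^sub>v (Mop n s *\<^sub>v v)) $ r"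
  proof (cases "\<forall>j<n. bit s j \<longrightarrow> \<not> bit r j")
    case True
    show ?thesis
    proof (cases "v $ (xor r s) = 0")
      case False
      have "hamming_weight n (xor r s) = w" using cw[OF x False] .
      hence "hamming_weight n r = w - hamming_weight n s" using hw_disj[of n s r] True by simp
      thus ?thesis using True r by (simp add: kraus_vec[OF v s r] Mop_vec[OF v s r] kap_disj)
    qed (use r in \<open>simp add: kraus_vec[OF v s r] Mop_vec[OF v s r]\<close>)
  next
    case False
    then obtain j where j: "j < n" "bit s j" "bit r j" by blast
    have "\<not> (\<forall>j<n. bit s j \<longrightarrow> \<not> bit r j)" using j by blast
    thus ?thesis using r j by (auto simp add: kraus_vec[OF v s r] Mop_vec[OF v s r] kap_nondisj[OF j])
  qed
qed simp

lemma Mop_split: "Mop n s = pN n (\<lambda>j. if bit s j then 1 else 0) * ntensor n (\<lambda>j. if j \<in> {j. j < n \<and> bit s j} then proj1 True else 1\<^sub>m 2)"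
proof -
  have "pN n (\<lambda>j. if bit s j then 1 else 0) * ntensor n (\<lambda>j. if j \<in> {j. j < n \<and> bit s j} then proj1 True else 1\<^sub>m 2)
     = ntensor n (\<lambda>j. pauli1 (if bit s j then 1 else 0) * (if j \<in> {j. j < n \<and> bit s j} then proj1 True else 1\<^sub>m 2))"
    unfolding pN_def by (rule nt_mult) (auto simp: proj1_def)
  also have "\<dots> = Mop n s" unfolding Mop_def
    by (intro nt_cong) (auto simp: pauli1_def pauli_m2 proj1_def m2_one)
  finally show ?thesis by simp
qed

lemma clifford_pN: assumes p: "\<And>j. p j < 4" shows "clifford n (pN n p)"
proof -
  have pg: "pN n p \<in> pauli_group n" using p by (rule pg_intro1)
  have h: "dagger (pN n p) = pN n p" using p by (intro pN_herm) auto
  have sq: "pN n p * pN n p = 1\<^sub>m (2^n)" using p by (intro pN_sq) auto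
  have "pN n p * P * dagger (pN n p) \<in> pauli_group n" if P: "P \<in> pauli_group n" for P
  proof -
    have Pc: "P \<in> carrier_mat (2^n) (2^n)" using pg_carrier[OF P] .
    obtain s where s: "s = 1 \<or> s = -1" "pN n p * P = s \<cdot>\<^sub>m (P * pN n p)" using pg_comm_s[OF pg P] by blast
    have "pN n p * P * dagger (pN n p) = s \<cdot>\<^sub>m (P * (pN n p * pN n p))"
      unfolding h s(2) using Pc by (simp add: matN[of _ "2^n"])
    also have "\<dots> = s \<cdot>\<^sub>m P" using sq Pc by simp
    finally show ?thesis using s(1) P pg_neg by (auto simp: one_smult_mat)
  qed
  thus ?thesis using sq h by (simp add: clifford_def unitary_mat_def)
qed

lemma proj_set:
  assumes st: "stabilizer_state n \<phi>" and S: "S \<subseteq> {..<n}"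
  shows "\<exists>a \<phi>'. stabilizer_state n \<phi>' \<and> ntensor n (\<lambda>j. if j \<in> S then proj1 True else 1\<^sub>m 2) *\<^sub>v \<phi> = a \<cdot>\<^sub>v \<phi>'"
proof -
  have fin: "finite S" using S finite_subset by blast
  have vc: "\<phi> \<in> carrier_vec (2^n)" using stab_carrier[OF st] .
  show ?thesis using fin S
  proof (induction S rule: finite_subset_induct)
    case empty
    have "ntensor n (\<lambda>j. if j \<in> {} then proj1 True else 1\<^sub>m 2) = 1\<^sub>m (2^n)" by (simp add: nt_one)
    thus ?case using st vc by (intro exI[of _ 1] exI[of _ \<phi>]) simp
  next
    case (insert a F)
    obtain b \<phi>1 where b: "stabilizer_state n \<phi>1" "ntensor n (\<lambda>j. if j \<in> F then proj1 True else 1\<^sub>m 2) *\<^sub>v \<phi> = b \<cdot>\<^sub>v \<phi>1"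
      using insert.IH by blast
    have an: "a < n" using insert.hyps(2) by simp
    obtain c \<phi>2 where c: "stabilizer_state n \<phi>2" "Pj n a True *\<^sub>v \<phi>1 = c \<cdot>\<^sub>v \<phi>2"
      using proj_stab[OF b(1) an] by blast
    have "ntensor n (\<lambda>j. if j \<in> insert a F then proj1 True else 1\<^sub>m 2) =
          Pj n a True * ntensor n (\<lambda>j. if j \<in> F then proj1 True else 1\<^sub>m 2)"
      unfolding Pj_def using insert.hyps(3)
      by (subst nt_mult) (auto simp: proj1_def m2_one intro!: nt_cong)
    hence "ntensor n (\<lambda>j. if j \<in> insert a F then proj1 True else 1\<^sub>m 2) *\<^sub>v \<phi> = Pj n a True *\<^sub>v (b \<cdot>\<^sub>v \<phi>1)"
      using vc b(2) by (simp add: assoc_mult_mat_vec[of _ "2^n" "2^n" _ "2^n"])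
    also have "\<dots> = (b * c) \<cdot>\<^sub>v \<phi>2" using stab_carrier[OF b(1)] c(2) by (simp add: mult_mat_vec[of _ "2^n" "2^n"] smult_smult_assoc)
    finally show ?case using c(1) by blast
  qed
qed

lemma channel_cw:
  assumes st: "stabilizer_state n \<psi>" and g: "0 \<le> g" "g \<le> 1"
    and cw: "\<And>x. x < 2^n \<Longrightarrow> \<psi> $ x \<noteq> 0 \<Longrightarrow> hamming_weight n x = w"
  shows "AD_channel n g (proj \<psi>) \<in> stab_polytope n"
proof -
  have v: "\<psi> \<in> carrier_vec (2^n)" using stab_carrier[OF st] .
  show ?thesis
  proof (rule assemble[OF g v stab_norm[OF st]])
    fix s :: nat assume s: "s < 2^n"
    let ?c = "complex_of_real (sqrt g) ^ hamming_weight n s * complex_of_real (sqrt (1-g)) ^ (w - hamming_weight n s)"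
    let ?X = "pN n (\<lambda>j. if bit s j then 1 else 0)"
    let ?N = "ntensor n (\<lambda>j. if j \<in> {j. j < n \<and> bit s j} then proj1 True else 1\<^sub>m 2)"
    obtain a \<phi>' where a: "stabilizer_state n \<phi>'" "?N *\<^sub>v \<psi> = a \<cdot>\<^sub>v \<phi>'"
      using proj_set[OF st, of "{j. j < n \<and> bit s j}"] by auto
    have Xc: "clifford n ?X" by (rule clifford_pN) simp
    have "AD_kraus n g s *\<^sub>v \<psi> = ?c \<cdot>\<^sub>v (Mop n s *\<^sub>v \<psi>)" by (rule kraus_cw[OF v s cw])
    also have "Mop n s *\<^sub>v \<psi> = ?X *\<^sub>v (?N *\<^sub>v \<psi>)"
      unfolding Mop_split using v by (simp add: assoc_mult_mat_vec[of _ "2^n" "2^n" _ "2^n"])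
    also have "\<dots> = a \<cdot>\<^sub>v (?X *\<^sub>v \<phi>')" using a(2) stab_carrier[OF a(1)] by (simp add: mult_mat_vec[of _ "2^n" "2^n"])
    finally have "AD_kraus n g s *\<^sub>v \<psi> = (?c * a) \<cdot>\<^sub>v (?X *\<^sub>v \<phi>')" by (simp add: smult_smult_assoc)
    thus "\<exists>a \<phi>. stabilizer_state n \<phi> \<and> AD_kraus n g s *\<^sub>v \<psi> = a \<cdot>\<^sub>v \<phi>"
      using stab_clifford[OF Xc a(1)] by blast
  qed
qed

lemma bits_exist: "\<exists>k<(2::nat)^n. \<forall>l<n. bit k l = f l"
proof (induction n)
  case 0 thus ?case by auto
next
  case (Suc n)
  then obtain k :: nat where k: "k < 2^n" "\<forall>l<n. bit k l = f l" by blast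
  define k' where "k' = k + (if f n then 2^n else 0)"
  have nb: "\<not> bit k m" if "n \<le> m" for m using bit_ge_zero[OF k(1) that] .
  have bits: "bit k' l = (if l = n then f n else bit k l)" for l
  proof (cases "f n")
    case True
    have dis: "\<And>m. \<not> bit k m \<or> \<not> bit ((2::nat)^n) m" using nb by (auto simp: bit_exp_iff)
    have "bit k' l = (bit k l \<or> bit ((2::nat)^n) l)" unfolding k'_def using True
      by (simp add: bit_disjunctive_add_iff[OF dis])
    thus ?thesis using True nb[of l] by (auto simp: bit_exp_iff)
  next
    case False thus ?thesis using nb[of n] by (auto simp: k'_def)
  qed
  have "k' < 2^Suc n" using k(1) by (simp add: k'_def)
  moreover have "\<forall>l<Suc n. bit k' l = f l" using k(2) by (auto simp: bits less_Suc_eq)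
  ultimately show ?case by blast
qed

lemma pN_vec_norm:
  assumes p: "\<And>l. p l < 4" and mk: "mk < 2^n" "\<And>l. l < n \<Longrightarrow> bit mk l = pflip (p l)"
    and v: "v \<in> carrier_vec (2^n)" and r: "r < 2^n"
  shows "cmod ((pN n p *\<^sub>v v) $ r) = cmod (v $ (xor r mk))"
proof -
  have "(pN n p *\<^sub>v v) $ r = (\<Prod>l<n. ent (pauli1 (p l)) (bit r l) (bit r l \<noteq> bit mk l)) * v $ (xor r mk)"
    unfolding pN_def by (rule nt_mult_vec_mono[OF _ _ mk(1) v r]) (auto simp: mk(2) intro!: pauli1_mono p)
  moreover have "cmod (\<Prod>l<n. ent (pauli1 (p l)) (bit r l) (bit r l \<noteq> bit mk l)) = 1"
  proof -
    have "cmod (\<Prod>l<n. ent (pauli1 (p l)) (bit r l) (bit r l \<noteq> bit mk l)) = (\<Prod>l<n. cmod (ent (pauli1 (p l)) (bit r l) (bit r l \<noteq> bit mk l)))"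
      by (simp add: prod_norm)
    also have "\<dots> = 1"
    proof (rule prod.neutral, rule ballI)
      fix l assume "l \<in> {..<n}"
      hence "bit mk l = pflip (p l)" using mk(2) by simp
      thus "cmod (ent (pauli1 (p l)) (bit r l) (bit r l \<noteq> bit mk l)) = 1" using pauli1_unimod[OF p] by simp
    qed
    finally show ?thesis .
  qed
  ultimately show ?thesis by (simp add: norm_mult)
qed

definition undet :: "nat \<Rightarrow> complex vec \<Rightarrow> nat set" where
  "undet n \<phi> = {j. j < n \<and> \<not> (\<exists>lam. pN n (zq j) *\<^sub>v \<phi> = lam \<cdot>\<^sub>v \<phi>)}"

lemma stab_nonzero: assumes st: "stabilizer_state n \<phi>" shows "\<exists>r<2^n. \<phi> $ r \<noteq> 0"
proof (rule ccontr)
  assume "\<not> (\<exists>r<2^n. \<phi> $ r \<noteq> 0)"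
  hence "vnorm2 n \<phi> = 0" by (simp add: vnorm2_def)
  thus False using stab_norm[OF st] by simp
qed

lemma anti_flip:
  assumes st: "stabilizer_state n \<phi>" and j: "j < n" and g: "g = \<i>^m \<cdot>\<^sub>m pN n p" and p: "\<And>l. p l < 4"
    and gv: "g *\<^sub>v \<phi> = \<phi>" and anti: "g * pN n (zq j) = (-1) \<cdot>\<^sub>m (pN n (zq j) * g)"
  shows "pflip (p j)"
proof (rule ccontr)
  assume nf: "\<not> pflip (p j)"
  let ?Z = "pN n (zq j)"
  have vc: "\<phi> \<in> carrier_vec (2^n)" using stab_carrier[OF st] .
  have gc: "g \<in> carrier_mat (2^n) (2^n)" unfolding g by simp
  have "g * ?Z = ?Z * g" unfolding g
    using Z_comm[of j n p] j p nf by (simp add: smultL[of _ "2^n"] smultR[of _ "2^n"])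
  hence M: "?Z * g = (-1) \<cdot>\<^sub>m (?Z * g)" using anti by simp
  have Zgc: "?Z * g \<in> carrier_mat (2^n) (2^n)" using mult_carrier_mat[OF pN_carrier gc] .
  have "\<phi> $ r = 0" if r: "r < 2^n" for r
  proof -
    have "((?Z * g) *\<^sub>v \<phi>) $ r = - ((?Z * g) *\<^sub>v \<phi>) $ r"
      using smult_mat_vec_index[OF Zgc vc r, of "-1"] by (subst (1) M) simp
    hence "((?Z * g) *\<^sub>v \<phi>) $ r = 0" by simp
    moreover have "(?Z * g) *\<^sub>v \<phi> = ?Z *\<^sub>v \<phi>" using gc vc gv by (simp add: assocNv[of _ "2^n"])
    ultimately have "(?Z *\<^sub>v \<phi>) $ r = 0" by simp
    thus ?thesis using Z_vec[OF vc j r] by (auto split: if_splits)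
  qed
  thus False using stab_nonzero[OF st] by blast
qed

lemma rt2_nz: "rt2 \<noteq> 0" by (simp add: rt2_def)

lemma undet_sub: "undet n \<phi> \<subseteq> {..<n}" by (auto simp: undet_def)

lemma uniform:
  "stabilizer_state n \<phi> \<Longrightarrow> x < 2^n \<Longrightarrow> y < 2^n \<Longrightarrow> \<phi> $ x \<noteq> 0 \<Longrightarrow> \<phi> $ y \<noteq> 0 \<Longrightarrow> cmod (\<phi> $ x) = cmod (\<phi> $ y)"
proof (induction "card (undet n \<phi>)" arbitrary: \<phi> x y rule: less_induct)
  case less
  note st = less.prems(1) and x = less.prems(2) and y = less.prems(3)
  have vc: "\<phi> \<in> carrier_vec (2^n)" using stab_carrier[OF st] .
  show ?case
  proof (cases "undet n \<phi> = {}")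
    case True
    have "x = y"
    proof (rule ccontr)
      assume "x \<noteq> y"
      then obtain j where j: "j < n" "bit x j \<noteq> bit y j" using bits_eqI[of x n y] x y by blast
      hence "j \<notin> undet n \<phi>" using True by simp
      then obtain lam where lam: "pN n (zq j) *\<^sub>v \<phi> = lam \<cdot>\<^sub>v \<phi>" using j(1) by (auto simp: undet_def)
      have ev: "(if bit z j then -1 else 1) = lam" if z: "z < 2^n" "\<phi> $ z \<noteq> 0" for z
      proof -
        have a: "(pN n (zq j) *\<^sub>v \<phi>) $ z = lam * \<phi> $ z" using lam z(1) vc by simp
        have "(if bit z j then -1 else 1) * \<phi> $ z = lam * \<phi> $ z"
          using Z_vec[OF vc j(1) z(1)] a by metis
        thus ?thesis using z(2) by simp
      qed
      show False using ev[OF x less.prems(4)] ev[OF y less.prems(5)] j(2) by (auto split: if_splits)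
    qed
    thus ?thesis by simp
  next
    case False
    then obtain j where j: "j \<in> undet n \<phi>" by blast
    hence jn: "j < n" and nd: "\<not> (\<exists>lam. pN n (zq j) *\<^sub>v \<phi> = lam \<cdot>\<^sub>v \<phi>)" by (auto simp: undet_def)
    obtain g where g: "g \<in> pauli_group n" "g *\<^sub>v \<phi> = \<phi>" "g * pN n (zq j) = (-1) \<cdot>\<^sub>m (pN n (zq j) * g)"
      and spl: "\<forall>b. \<exists>\<phi>'. stabilizer_state n \<phi>' \<and> Pj n j b *\<^sub>v \<phi> = rt2 \<cdot>\<^sub>v \<phi>'"
      using split_lemma[OF st jn] nd by blast
    obtain \<phi>0 where p0: "stabilizer_state n \<phi>0" "Pj n j False *\<^sub>v \<phi> = rt2 \<cdot>\<^sub>v \<phi>0" using spl by blast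
    have v0: "\<phi>0 \<in> carrier_vec (2^n)" using stab_carrier[OF p0(1)] .
    have comp: "rt2 * \<phi>0 $ r = (if bit r j then 0 else \<phi> $ r)" if r: "r < 2^n" for r
    proof -
      have "(Pj n j False *\<^sub>v \<phi>) $ r = (rt2 \<cdot>\<^sub>v \<phi>0) $ r" using p0(2) by simp
      hence "(if bit r j = False then \<phi> $ r else 0) = rt2 * \<phi>0 $ r"
        using Pj_vec[OF vc jn r, of False] r v0 by simp
      thus ?thesis by (cases "bit r j") auto
    qed
    have comp': "\<phi>0 $ r = (if bit r j then 0 else \<phi> $ r / rt2)" if r: "r < 2^n" for r
      using comp[OF r] rt2_nz by (auto simp: field_simps)
    have sub: "undet n \<phi>0 \<subseteq> undet n \<phi> - {j}"
    proof
      fix i assume i: "i \<in> undet n \<phi>0"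
      hence iN: "i < n" and nd0: "\<not> (\<exists>lam. pN n (zq i) *\<^sub>v \<phi>0 = lam \<cdot>\<^sub>v \<phi>0)" by (auto simp: undet_def)
      have "i \<noteq> j"
      proof
        assume "i = j"
        have "pN n (zq j) *\<^sub>v \<phi>0 = 1 \<cdot>\<^sub>v \<phi>0"
        proof (rule eq_vecI)
          fix r assume "r < dim_vec (1 \<cdot>\<^sub>v \<phi>0)"
          hence r: "r < 2^n" using v0 by simp
          show "(pN n (zq j) *\<^sub>v \<phi>0) $ r = (1 \<cdot>\<^sub>v \<phi>0) $ r"
            using Z_vec[OF v0 jn r] comp'[OF r] r v0 by simp
        qed (use v0 in simp)
        thus False using nd0 \<open>i = j\<close> by blast
      qed
      moreover have "i \<in> undet n \<phi>"
      proof (rule ccontr)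
        assume "i \<notin> undet n \<phi>"
        then obtain lam where lam: "pN n (zq i) *\<^sub>v \<phi> = lam \<cdot>\<^sub>v \<phi>" using iN by (auto simp: undet_def)
        have "pN n (zq i) *\<^sub>v \<phi>0 = lam \<cdot>\<^sub>v \<phi>0"
        proof (rule eq_vecI)
          fix r assume "r < dim_vec (lam \<cdot>\<^sub>v \<phi>0)"
          hence r: "r < 2^n" using v0 by simp
          have "(pN n (zq i) *\<^sub>v \<phi>) $ r = lam * \<phi> $ r" using lam r vc by simp
          hence e: "(if bit r i then -1 else 1) * \<phi> $ r = lam * \<phi> $ r" using Z_vec[OF vc iN r] by simp
          show "(pN n (zq i) *\<^sub>v \<phi>0) $ r = (lam \<cdot>\<^sub>v \<phi>0) $ r"
            using Z_vec[OF v0 iN r] comp'[OF r] r v0 e by (auto simp: field_simps)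
        qed (use v0 in simp)
        thus False using nd0 by blast
      qed
      ultimately show "i \<in> undet n \<phi> - {j}" by simp
    qed
    have fin: "finite (undet n \<phi>)" using undet_sub finite_subset by blast
    have lt: "card (undet n \<phi>0) < card (undet n \<phi>)"
    proof -
      have "card (undet n \<phi>0) \<le> card (undet n \<phi> - {j})" using sub fin by (intro card_mono) auto
      also have "\<dots> < card (undet n \<phi>)" using card_Diff1_less[OF fin j] .
      finally show ?thesis .
    qed
    obtain m p where mp: "m < 4" "\<forall>l. p l < 4" "g = \<i>^m \<cdot>\<^sub>m pN n p" using pg_elim[OF g(1)] by blast
    have fl: "pflip (p j)" by (rule anti_flip[OF st jn mp(3) _ g(2) g(3)]) (use mp(2) in simp)
    obtain mk :: nat where mk: "mk < 2^n" "\<forall>l<n. bit mk l = pflip (p l)" using bits_exist[of n "\<lambda>l. pflip (p l)"] by blast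
    have rep: "\<exists>z'. z' < 2^n \<and> \<not> bit z' j \<and> \<phi> $ z' \<noteq> 0 \<and> cmod (\<phi> $ z') = cmod (\<phi> $ z)"
      if z: "z < 2^n" "\<phi> $ z \<noteq> 0" for z
    proof (cases "bit z j")
      case True
      have zx: "xor z mk < 2^n" using xor_lt[OF z(1) mk(1)] .
      have "cmod (\<phi> $ z) = cmod ((g *\<^sub>v \<phi>) $ z)" using g(2) by simp
      also have "\<dots> = cmod ((pN n p *\<^sub>v \<phi>) $ z)"
        unfolding mp(3) using vc z(1) by (simp add: smult_mat_vec_index[of _ "2^n"] norm_mult norm_power)
      also have "\<dots> = cmod (\<phi> $ (xor z mk))"
        by (rule pN_vec_norm[OF _ mk(1) _ vc z(1)]) (use mp(2) mk(2) in auto)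
      finally have e: "cmod (\<phi> $ z) = cmod (\<phi> $ (xor z mk))" .
      have "\<not> bit (xor z mk) j" using True mk(2) jn fl by (simp add: bit_xor_iff)
      moreover have "\<phi> $ (xor z mk) \<noteq> 0" using e z(2) by auto
      ultimately show ?thesis using zx e by (intro exI[of _ "xor z mk"]) simp
    next
      case False
      thus ?thesis using z by (intro exI[of _ z]) simp
    qed
    obtain x' where x': "x' < 2^n" "\<not> bit x' j" "\<phi> $ x' \<noteq> 0" "cmod (\<phi> $ x') = cmod (\<phi> $ x)"
      using rep[OF x less.prems(4)] by blast
    obtain y' where y': "y' < 2^n" "\<not> bit y' j" "\<phi> $ y' \<noteq> 0" "cmod (\<phi> $ y') = cmod (\<phi> $ y)"
      using rep[OF y less.prems(5)] by blast
    have nx: "\<phi>0 $ x' \<noteq> 0" using comp'[OF x'(1)] x'(2,3) rt2_nz by simp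
    have ny: "\<phi>0 $ y' \<noteq> 0" using comp'[OF y'(1)] y'(2,3) rt2_nz by simp
    have "cmod (\<phi>0 $ x') = cmod (\<phi>0 $ y')"
      by (rule less.hyps[OF lt p0(1) x'(1) y'(1) nx ny])
    hence "cmod (\<phi> $ x') = cmod (\<phi> $ y')" using comp'[OF x'(1)] comp'[OF y'(1)] x'(2) y'(2) rt2_nz
      by (simp add: norm_divide)
    thus ?thesis using x'(4) y'(4) by simp
  qed
qed

lemma stab_pair_bound: assumes st: "stabilizer_state n \<phi>" and x: "x < 2^n" and y: "y < 2^n"
  shows "cmod (\<phi> $ x) * cmod (\<phi> $ y) \<le> (cmod (\<phi> $ x))^2"
proof (cases "\<phi> $ x = 0 \<or> \<phi> $ y = 0")
  case False
  hence "cmod (\<phi> $ x) = cmod (\<phi> $ y)" using uniform[OF st x y] by blast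
  thus ?thesis by (simp add: power2_eq_square)
qed auto

lemma polytope_bound: assumes rho: "\<rho> \<in> stab_polytope n" and x: "x < 2^n" and y: "y < 2^n"
  shows "cmod (\<rho> $$ (x,y)) \<le> Re (\<rho> $$ (x,x))"
proof -
  from rho[unfolded stab_polytope_def mem_Collect_eq] show ?thesis
  proof (elim exE conjE)
    fix m p \<psi>
    assume p: "\<forall>i<m. 0 \<le> p i \<and> stabilizer_state n (\<psi> i)"
      and r: "\<rho> = mat (2^n) (2^n) (\<lambda>(r,c). \<Sum>i<m. complex_of_real (p i) * proj (\<psi> i) $$ (r,c))"
    have dv: "dim_vec (\<psi> i) = 2^n" if i: "i < m" for i
    proof -
      have "stabilizer_state n (\<psi> i)" using p i by blast
      thus ?thesis using stab_carrier carrier_vecD by blast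
    qed
    have "\<rho> $$ (x,y) = (\<Sum>i<m. complex_of_real (p i) * proj (\<psi> i) $$ (x,y))"
      unfolding r using x y by simp
    also have "\<dots> = (\<Sum>i<m. complex_of_real (p i) * (\<psi> i $ x * cnj (\<psi> i $ y)))"
      using x y dv by (intro sum.cong refl) (simp add: proj_index)
    finally have exy: "\<rho> $$ (x,y) = (\<Sum>i<m. complex_of_real (p i) * (\<psi> i $ x * cnj (\<psi> i $ y)))" .
    have "\<rho> $$ (x,x) = (\<Sum>i<m. complex_of_real (p i) * proj (\<psi> i) $$ (x,x))"
      unfolding r using x by simp
    also have "\<dots> = (\<Sum>i<m. complex_of_real (p i) * (\<psi> i $ x * cnj (\<psi> i $ x)))"
      using x dv by (intro sum.cong refl) (simp add: proj_index)
    also have "\<dots> = (\<Sum>i<m. complex_of_real (p i * (cmod (\<psi> i $ x))^2))"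
      by (intro sum.cong refl) (simp only: of_real_mult complex_norm_square)
    finally have exx: "\<rho> $$ (x,x) = (\<Sum>i<m. complex_of_real (p i * (cmod (\<psi> i $ x))^2))" .
    have "cmod (\<rho> $$ (x,y)) \<le> (\<Sum>i<m. cmod (complex_of_real (p i) * (\<psi> i $ x * cnj (\<psi> i $ y))))"
      unfolding exy by (rule norm_sum)
    also have "\<dots> = (\<Sum>i<m. p i * (cmod (\<psi> i $ x) * cmod (\<psi> i $ y)))"
      using p by (intro sum.cong refl) (simp add: norm_mult)
    also have "\<dots> \<le> (\<Sum>i<m. p i * (cmod (\<psi> i $ x))^2)"
    proof (rule sum_mono)
      fix i assume "i \<in> {..<m}"
      hence pi: "0 \<le> p i" "stabilizer_state n (\<psi> i)" using p by auto
      show "p i * (cmod (\<psi> i $ x) * cmod (\<psi> i $ y)) \<le> p i * (cmod (\<psi> i $ x))^2"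
        by (rule mult_left_mono[OF stab_pair_bound[OF pi(2) x y] pi(1)])
    qed
    also have "\<dots> = Re (\<rho> $$ (x,x))" unfolding exx by (simp add: Re_sum)
    finally show ?thesis .
  qed
qed

lemma kap0: "kap n g 0 r = complex_of_real (sqrt (1-g)) ^ hamming_weight n r"
  using kap_disj[of n 0 r g] by (simp add: hamming_weight_def)

lemma hw_pos: "(s::nat) < 2^n \<Longrightarrow> s \<noteq> 0 \<Longrightarrow> hamming_weight n s > 0"
  using nonzero_bit[of s n] by (auto simp: hamming_weight_def card_gt_0_iff)

lemma hw_le_n: "hamming_weight n x \<le> n"
  unfolding hamming_weight_def by (rule order_trans[OF card_mono[of "{..<n}"]]) auto

lemma kraus_max:
  assumes v: "v \<in> carrier_vec (2^n)" and x: "x < 2^n" and s: "s < 2^n" "s \<noteq> 0"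
    and mx: "\<And>z. z < 2^n \<Longrightarrow> v $ z \<noteq> 0 \<Longrightarrow> hamming_weight n z \<le> hamming_weight n x"
  shows "(AD_kraus n g s *\<^sub>v v) $ x = 0"
proof (cases "\<forall>j<n. bit s j \<longrightarrow> \<not> bit x j")
  case True
  have "hamming_weight n (xor x s) = hamming_weight n x + hamming_weight n s" using hw_disj[of n s x] True by blast
  hence "hamming_weight n (xor x s) > hamming_weight n x" using hw_pos[OF s] by simp
  hence "v $ (xor x s) = 0" using mx[OF xor_lt[OF x s(1)]] by fastforce
  thus ?thesis by (simp add: kraus_vec[OF v s(1) x])
next
  case False
  then obtain j where j: "j < n" "bit s j" "bit x j" by blast
  thus ?thesis by (simp add: kraus_vec[OF v s(1) x] kap_nondisj[OF j])
qed

lemma kraus_zero_vec: assumes v: "v \<in> carrier_vec (2^n)" and r: "r < 2^n"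
  shows "(AD_kraus n g 0 *\<^sub>v v) $ r = complex_of_real (sqrt (1-g)) ^ hamming_weight n r * v $ r"
  using kraus_vec[OF v _ r, of 0] by (simp add: kap0)

lemma generator:
  assumes st: "stabilizer_state n \<psi>" and g: "0 < g" "g < 1"
    and x: "x < 2^n" "\<psi> $ x \<noteq> 0" and y: "y < 2^n" "\<psi> $ y \<noteq> 0"
    and lt: "hamming_weight n y < hamming_weight n x"
    and mx: "\<And>z. z < 2^n \<Longrightarrow> \<psi> $ z \<noteq> 0 \<Longrightarrow> hamming_weight n z \<le> hamming_weight n x"
  shows "AD_channel n g (proj \<psi>) \<notin> stab_polytope n"
proof
  assume inP: "AD_channel n g (proj \<psi>) \<in> stab_polytope n"
  have v: "\<psi> \<in> carrier_vec (2^n)" using stab_carrier[OF st] .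
  let ?t = "sqrt (1-g)"
  let ?K = "\<lambda>s. AD_kraus n g s *\<^sub>v \<psi>"
  have red: "(\<Sum>s<2^n. ?K s $ x * cnj (?K s $ c)) = ?K 0 $ x * cnj (?K 0 $ c)" for c
  proof -
    have "(\<Sum>s<2^n. ?K s $ x * cnj (?K s $ c)) = (\<Sum>s\<in>{..<(2::nat)^n}. if s = 0 then ?K 0 $ x * cnj (?K 0 $ c) else 0)"
      by (intro sum.cong refl) (auto simp: kraus_max[OF v x(1) _ _ mx])
    thus ?thesis by simp
  qed
  have exy: "AD_channel n g (proj \<psi>) $$ (x,y) = complex_of_real ?t ^ hamming_weight n x * \<psi> $ x * cnj (complex_of_real ?t ^ hamming_weight n y * \<psi> $ y)"
    by (simp add: channel_entry[OF v x(1) y(1)] red kraus_zero_vec[OF v] x(1) y(1))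
  have exx: "AD_channel n g (proj \<psi>) $$ (x,x) = complex_of_real ?t ^ hamming_weight n x * \<psi> $ x * cnj (complex_of_real ?t ^ hamming_weight n x * \<psi> $ x)"
    by (simp add: channel_entry[OF v x(1) x(1)] red kraus_zero_vec[OF v] x(1))
  have c: "cmod (\<psi> $ y) = cmod (\<psi> $ x)" using uniform[OF st y(1) x(1) y(2) x(2)] .
  define c0 where "c0 = cmod (\<psi> $ x)"
  have c0: "c0 > 0" using x(2) by (simp add: c0_def)
  have t0: "0 < ?t" "?t < 1" using g by auto
  have "cmod (AD_channel n g (proj \<psi>) $$ (x,y)) = ?t ^ (hamming_weight n x + hamming_weight n y) * c0^2"
    unfolding exy using t0 by (simp add: norm_mult norm_power c c0_def power_add power2_eq_square)
  moreover have "Re (AD_channel n g (proj \<psi>) $$ (x,x)) = ?t ^ (hamming_weight n x + hamming_weight n x) * c0^2"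
  proof -
    have "complex_of_real ?t ^ hamming_weight n x * \<psi> $ x * cnj (complex_of_real ?t ^ hamming_weight n x * \<psi> $ x)
        = complex_of_real ((cmod (complex_of_real ?t ^ hamming_weight n x * \<psi> $ x))^2)"
      by (rule complex_norm_square[symmetric])
    hence "Re (AD_channel n g (proj \<psi>) $$ (x,x)) = (cmod (complex_of_real ?t ^ hamming_weight n x * \<psi> $ x))^2"
      unfolding exx by simp
    also have "\<dots> = ?t ^ (hamming_weight n x + hamming_weight n x) * c0^2"
      using t0 by (simp add: norm_mult norm_power c0_def power_add power_mult_distrib power2_eq_square)
    finally show ?thesis .
  qed
  moreover have "?t ^ (hamming_weight n x + hamming_weight n x) < ?t ^ (hamming_weight n x + hamming_weight n y)"
    using lt t0 by (intro power_strict_decreasing) auto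
  ultimately have "Re (AD_channel n g (proj \<psi>) $$ (x,x)) < cmod (AD_channel n g (proj \<psi>) $$ (x,y))"
    using c0 by simp
  thus False using polytope_bound[OF inP x(1) y(1)] by simp
qed

theorem propositionS6:
  fixes n :: nat and \<phi> :: "complex vec"
  assumes "stabilizer_state n \<phi>"
  defines "A \<equiv> support n \<phi>"
  shows "(magic_insulator n \<phi> \<longleftrightarrow>
            (\<forall>x\<in>A. \<forall>y\<in>A. hamming_weight n x = hamming_weight n y))
       \<and> (\<not> (\<forall>x\<in>A. \<forall>y\<in>A. hamming_weight n x = hamming_weight n y) \<longrightarrow> magic_generator n \<phi>)
       \<and> ({\<gamma>::real. 0 \<le> \<gamma> \<and> \<gamma> \<le> 1 \<and> AD_channel n \<gamma> (proj \<phi>) \<in> stab_polytope n} = {0..1}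
          \<or> {\<gamma>::real. 0 \<le> \<gamma> \<and> \<gamma> \<le> 1 \<and> AD_channel n \<gamma> (proj \<phi>) \<in> stab_polytope n} = {0,1})"
proof -
  note st = assms(1)
  let ?P = "\<forall>x\<in>A. \<forall>y\<in>A. hamming_weight n x = hamming_weight n y"
  let ?C = "\<lambda>\<gamma>. AD_channel n \<gamma> (proj \<phi>)"
  have Adef: "\<And>z. z \<in> A \<longleftrightarrow> z < 2^n \<and> \<phi> $ z \<noteq> 0" by (simp add: A_def support_def)
  obtain x0 where x0: "x0 < 2^n" "\<phi> $ x0 \<noteq> 0" using stab_nonzero[OF st] by blast
  have ins: "?C g \<in> stab_polytope n" if P: ?P and g: "0 \<le> g" "g \<le> 1" for g
  proof (rule channel_cw[OF st g])
    fix z assume "z < 2^n" "\<phi> $ z \<noteq> 0"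
    hence "z \<in> A" "x0 \<in> A" using x0 by (simp_all add: Adef)
    thus "hamming_weight n z = hamming_weight n x0" using P by blast
  qed
  have gen: "?C g \<notin> stab_polytope n" if nP: "\<not> ?P" and g: "0 < g" "g < 1" for g
  proof -
    have Asub: "A \<subseteq> {..<2^n}" using Adef by auto
    have finA: "finite A" using finite_subset[OF Asub finite_lessThan] .
    have neA: "A \<noteq> {}" using x0 by (auto simp: Adef)
    let ?M = "Max (hamming_weight n ` A)"
    have "?M \<in> hamming_weight n ` A" using finA neA by (intro Max_in) auto
    then obtain xm where xm0: "?M = hamming_weight n xm" "xm \<in> A" by (rule imageE)
    hence xm: "xm \<in> A" "hamming_weight n xm = ?M" by simp_all
    have mx: "hamming_weight n z \<le> hamming_weight n xm" if z: "z \<in> A" for z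
    proof -
      have "hamming_weight n z \<le> ?M" using finA z by (intro Max_ge) auto
      thus ?thesis using xm(2) by simp
    qed
    obtain a b where ab: "a \<in> A" "b \<in> A" "hamming_weight n a \<noteq> hamming_weight n b" using nP by blast
    obtain y where y: "y \<in> A" "hamming_weight n y \<noteq> hamming_weight n xm"
    proof (cases "hamming_weight n a = hamming_weight n xm")
      case True thus ?thesis using that[of b] ab by simp
    next
      case False thus ?thesis using that[of a] ab by simp
    qed
    have lt: "hamming_weight n y < hamming_weight n xm" using mx[OF y(1)] y(2) by simp
    have xm': "xm < 2^n" "\<phi> $ xm \<noteq> 0" using xm(1) Adef by auto
    have y': "y < 2^n" "\<phi> $ y \<noteq> 0" using y(1) Adef by auto
    have mx': "hamming_weight n z \<le> hamming_weight n xm" if "z < 2^n" "\<phi> $ z \<noteq> 0" for z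
      using mx[of z] that Adef by blast
    show ?thesis by (rule generator[OF st g xm' y' lt mx'])
  qed
  have c1: "magic_insulator n \<phi> \<longleftrightarrow> ?P"
  proof
    assume mi: "magic_insulator n \<phi>"
    show ?P
    proof (rule ccontr)
      assume "\<not> ?P"
      hence "?C (1/2) \<notin> stab_polytope n" by (intro gen) auto
      moreover have "?C (1/2) \<in> stab_polytope n" using mi by (simp add: magic_insulator_def)
      ultimately show False by simp
    qed
  next
    assume P: ?P show "magic_insulator n \<phi>" unfolding magic_insulator_def using ins[OF P] by blast
  qed
  have c2: "\<not> ?P \<longrightarrow> magic_generator n \<phi>"
  proof
    assume nP: "\<not> ?P" show "magic_generator n \<phi>" unfolding magic_generator_def using gen[OF nP] by blast
  qed
  have c3: "{\<gamma>::real. 0 \<le> \<gamma> \<and> \<gamma> \<le> 1 \<and> ?C \<gamma> \<in> stab_polytope n} = {0..1}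
          \<or> {\<gamma>::real. 0 \<le> \<gamma> \<and> \<gamma> \<le> 1 \<and> ?C \<gamma> \<in> stab_polytope n} = {0,1}"
  proof (cases ?P)
    case True
    have "{\<gamma>::real. 0 \<le> \<gamma> \<and> \<gamma> \<le> 1 \<and> ?C \<gamma> \<in> stab_polytope n} = {0..1}"
      using ins[OF True] by auto
    thus ?thesis by (rule disjI1)
  next
    case False
    have "{\<gamma>::real. 0 \<le> \<gamma> \<and> \<gamma> \<le> 1 \<and> ?C \<gamma> \<in> stab_polytope n} = {0,1}"
    proof (rule Set.set_eqI, rule iffI)
      fix g :: real assume "g \<in> {\<gamma>::real. 0 \<le> \<gamma> \<and> \<gamma> \<le> 1 \<and> ?C \<gamma> \<in> stab_polytope n}"
      hence g: "0 \<le> g" "g \<le> 1" "?C g \<in> stab_polytope n" by auto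
      show "g \<in> {0,1}"
      proof (rule ccontr)
        assume "g \<notin> {0,1}"
        hence "0 < g" "g < 1" using g by auto
        thus False using gen[OF False] g(3) by blast
      qed
    next
      fix g :: real assume "g \<in> {0,1}"
      thus "g \<in> {\<gamma>::real. 0 \<le> \<gamma> \<and> \<gamma> \<le> 1 \<and> ?C \<gamma> \<in> stab_polytope n}"
        using channel0[OF st] channel1[OF st] by auto
    qed
    thus ?thesis by (rule disjI2)
  qed
  show ?thesis by (intro conjI c1 c2 c3)
qed

end
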